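(* Let $\{Y_j\}_{j\in\mathbb{Z}}$ be i.i.d. with $P(|Y_1|>x)=x^{-\alpha}h(x)$ for $x>0$, where $\alpha\in(0,2)$ and $h$ is slowly varying at $+\infty$, with $EY_1=0$ if $\alpha>1$ and $Y_1$ symmetric if $\alpha=1$. Let $\{c_{n,j}: n\in\mathbb{N}, j\in\mathbb{Z}\}$ be real numbers such that for each $n$, $\sum_{j\in\mathbb{Z}}|c_{n,j}|^\alpha h(|c_{n,j}|^{-1})<+\infty$, and set $V_n=\sum_{j\in\mathbb{Z}}c_{n,j}Y_j$ (an almost surely convergent series). Then $V_n\to0$ in probability if, and only if, $\sum_{j\in\mathbb{Z}}|c_{n,j}|^\alpha h(|c_{n,j}|^{-1})\to0$ as $n\to\infty$.
   Context: Terms $|c|^\alpha h(1/|c|)$ are interpreted as $0$ when $c=0$ (note $|c|^\alpha h(1/|c|)=P(|c\,Y_1|>1)$ for $c\neq0$). *)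

theory Defs
  imports "HOL-Probability.Probability"
begin

definition slowly_varying :: "(real \<Rightarrow> real) \<Rightarrow> bool" where
  "slowly_varying h \<longleftrightarrow>
     (\<forall>\<^sub>F x in at_top. h x > 0) \<and>
     (\<forall>l>0. ((\<lambda>x. h (l * x) / h x) \<longlongrightarrow> 1) at_top)"

definition tail_term :: "real \<Rightarrow> (real \<Rightarrow> real) \<Rightarrow> real \<Rightarrow> real" where
  "tail_term \<alpha> h c = (if c = 0 then 0 else \<bar>c\<bar> powr \<alpha> * h (1 / \<bar>c\<bar>))"

definition (in prob_space) tendsto_zero_in_prob :: "(nat \<Rightarrow> 'a \<Rightarrow> real) \<Rightarrow> bool" where
  "tendsto_zero_in_prob V \<longleftrightarrow>
     (\<forall>\<epsilon>>0. (\<lambda>n. prob {\<omega> \<in> space M. \<bar>V n \<omega>\<bar> > \<epsilon>}) \<longlonglongrightarrow> 0)"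

end

theory Submission
  imports Defs
begin


locale setting = prob_space M for M :: "'a measure" +
  fixes Y :: "int \<Rightarrow> 'a \<Rightarrow> real" and \<alpha> :: real and h :: "real \<Rightarrow> real"
  assumes indep: "indep_vars (\<lambda>_. borel) Y UNIV"
    and ident: "\<forall>j. distr M borel (Y j) = distr M borel (Y 1)"
    and alpha: "0 < \<alpha>" "\<alpha> < 2"
    and sv: "slowly_varying h"
    and tail: "\<forall>x>0. prob {\<omega> \<in> space M. \<bar>Y 1 \<omega>\<bar> > x} = x powr (-\<alpha>) * h x"
    and mean0: "\<alpha> > 1 \<Longrightarrow> integrable M (Y 1) \<and> integral\<^sup>L M (Y 1) = 0"
    and symm: "\<alpha> = 1 \<Longrightarrow> distr M borel (\<lambda>\<omega>. - Y 1 \<omega>) = distr M borel (Y 1)"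
begin

lemma Ymeas[measurable]: "Y j \<in> borel_measurable M"
  using indep unfolding indep_vars_def by auto

definition G :: "real \<Rightarrow> real" where
  "G x = prob {\<omega> \<in> space M. \<bar>Y 1 \<omega>\<bar> > x}"

lemma G_nonneg: "0 \<le> G x" and G_le1: "G x \<le> 1"
  unfolding G_def by auto

lemma G_mono: "x \<le> y \<Longrightarrow> G y \<le> G x"
  unfolding G_def by (intro finite_measure_mono) auto

lemma G_pos: assumes "x > 0" shows "G x > 0"
proof -
  from sv obtain X0 where X0: "\<And>z. z \<ge> X0 \<Longrightarrow> h z > 0"
    unfolding slowly_varying_def eventually_at_top_linorder by auto
  define z where "z = max x X0"
  have "z > 0" "z \<ge> X0" "x \<le> z" using assms by (auto simp: z_def)
  then have "G z > 0" using tail X0[of z] by (simp add: G_def)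
  then show ?thesis using G_mono[OF \<open>x \<le> z\<close>] by linarith
qed

lemma G_ratio: assumes "l > 0"
  shows "((\<lambda>x. G (l * x) / G x) \<longlongrightarrow> l powr (-\<alpha>)) at_top"
proof -
  have lim: "((\<lambda>x. h (l * x) / h x) \<longlongrightarrow> 1) at_top"
    using sv assms unfolding slowly_varying_def by auto
  have "((\<lambda>x. l powr (-\<alpha>) * (h (l * x) / h x)) \<longlongrightarrow> l powr (-\<alpha>) * 1) at_top"
    by (intro tendsto_intros lim)
  moreover have "\<forall>\<^sub>F x in at_top. l powr (-\<alpha>) * (h (l * x) / h x) = G (l * x) / G x"
    using eventually_gt_at_top[of 0]
  proof eventually_elim
    case (elim x)
    have "G (l*x) = (l*x) powr (-\<alpha>) * h (l*x)" "G x = x powr (-\<alpha>) * h x"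
      using tail elim assms by (auto simp: G_def)
    moreover have "(l*x) powr (-\<alpha>) = l powr (-\<alpha>) * x powr (-\<alpha>)"
      using elim assms by (simp add: powr_mult)
    moreover have "x powr (-\<alpha>) > 0" using elim by simp
    ultimately show ?case by (simp add: field_simps)
  qed
  ultimately show ?thesis by (simp add: tendsto_cong)
qed

lemma G_ratio_ev_ge: assumes "l > 0" "b < l powr (-\<alpha>)"
  shows "\<exists>x0>0. \<forall>x\<ge>x0. b * G x \<le> G (l * x)"
proof -
  have "\<forall>\<^sub>F x in at_top. b < G (l * x) / G x"
    using order_tendstoD(1)[OF G_ratio[OF assms(1)] assms(2)] .
  then obtain x1 where x1: "\<And>x. x \<ge> x1 \<Longrightarrow> b < G (l * x) / G x"
    by (auto simp: eventually_at_top_linorder)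
  show ?thesis
  proof (intro exI[of _ "max x1 1"] conjI allI impI)
    fix x assume "max x1 1 \<le> x"
    then have "b < G (l * x) / G x" "G x > 0" using x1 G_pos by auto
    then show "b * G x \<le> G (l * x)" by (simp add: field_simps)
  qed simp
qed

lemma G_ratio_ev_le: assumes "l > 0" "l powr (-\<alpha>) < b"
  shows "\<exists>x0>0. \<forall>x\<ge>x0. G (l * x) \<le> b * G x"
proof -
  have "\<forall>\<^sub>F x in at_top. G (l * x) / G x < b"
    using order_tendstoD(2)[OF G_ratio[OF assms(1)] assms(2)] .
  then obtain x1 where x1: "\<And>x. x \<ge> x1 \<Longrightarrow> G (l * x) / G x < b"
    by (auto simp: eventually_at_top_linorder)
  show ?thesis
  proof (intro exI[of _ "max x1 1"] conjI allI impI)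
    fix x assume "max x1 1 \<le> x"
    then have "G (l * x) / G x < b" "G x > 0" using x1 G_pos by auto
    then show "G (l * x) \<le> b * G x" by (simp add: field_simps)
  qed simp
qed

lemma dbl_upper: assumes "\<beta> > \<alpha>"
  shows "\<exists>x0>0. \<forall>y\<ge>x0. G y \<le> 2 powr \<beta> * G (2 * y)"
proof -
  have "2 powr (-\<beta>) < 2 powr (-\<alpha>)" using assms by simp
  from G_ratio_ev_ge[OF _ this] obtain x0 where "x0 > 0" "\<forall>x\<ge>x0. 2 powr (-\<beta>) * G x \<le> G (2 * x)"
    by auto
  moreover have "2 powr \<beta> * (2 powr (-\<beta>) * G x) = G x" for x
    by (simp add: powr_minus field_simps)
  ultimately show ?thesis
    by (metis mult_left_mono powr_ge_zero)
qed

lemma dbl_lower: assumes "\<beta> < \<alpha>"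
  shows "\<exists>x0>0. \<forall>y\<ge>x0. G (2 * y) \<le> 2 powr (-\<beta>) * G y"
proof -
  have "2 powr (-\<alpha>) < 2 powr (-\<beta>)" using assms by simp
  from G_ratio_ev_le[OF _ this] show ?thesis by auto
qed

lemma G_small: assumes "e > 0" shows "\<exists>x0>0. \<forall>x\<ge>x0. G x \<le> e"
proof -
  have "(\<lambda>n. \<integral>\<omega>. indicator {\<omega> \<in> space M. \<bar>Y 1 \<omega>\<bar> > real n} \<omega> \<partial>M) \<longlonglongrightarrow> (\<integral>\<omega>. (0::real) \<partial>M)"
  proof (rule integral_dominated_convergence[where w="\<lambda>_. 1"])
    show "AE x in M. (\<lambda>i. indicator {\<omega> \<in> space M. \<bar>Y 1 \<omega>\<bar> > real i} x) \<longlonglongrightarrow> (0::real)"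
    proof (rule AE_I2)
      fix x assume "x \<in> space M"
      obtain N where "\<bar>Y 1 x\<bar> < real N" using reals_Archimedean2 by blast
      then have "\<forall>n\<ge>N. indicator {\<omega> \<in> space M. \<bar>Y 1 \<omega>\<bar> > real n} x = (0::real)"
        by (auto simp: indicator_def)
      then show "(\<lambda>i. indicator {\<omega> \<in> space M. \<bar>Y 1 \<omega>\<bar> > real i} x) \<longlonglongrightarrow> (0::real)"
        by (intro tendsto_eventually) (auto simp: eventually_sequentially)
    qed
  qed (auto simp: indicator_def)
  then have "(\<lambda>n. G (real n)) \<longlonglongrightarrow> 0"
    by (simp add: G_def)
  from order_tendstoD(2)[OF this assms] obtain N where N: "\<And>n. n \<ge> N \<Longrightarrow> G (real n) < e"
    by (auto simp: eventually_sequentially)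
  show ?thesis
  proof (intro exI[of _ "real N + 1"] conjI allI impI)
    fix x assume "real N + 1 \<le> x"
    then show "G x \<le> e" using N[of N] G_mono[of "real N" x] by auto
  qed simp
qed

end


context setting begin

lemma int_transfer:
  fixes f :: "real \<Rightarrow> real"
  assumes "f \<in> borel_measurable borel"
  shows "(\<integral>\<omega>. f (Y j \<omega>) \<partial>M) = (\<integral>\<omega>. f (Y 1 \<omega>) \<partial>M)"
proof -
  have "(\<integral>\<omega>. f (Y j \<omega>) \<partial>M) = integral\<^sup>L (distr M borel (Y j)) f"
    using integral_distr[of "Y j" M borel f] assms by simp
  also have "\<dots> = integral\<^sup>L (distr M borel (Y 1)) f" using ident by metis
  also have "\<dots> = (\<integral>\<omega>. f (Y 1 \<omega>) \<partial>M)"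
    using integral_distr[of "Y 1" M borel f] assms by simp
  finally show ?thesis .
qed

lemma prob_transfer:
  assumes "B \<in> sets borel"
  shows "prob {\<omega> \<in> space M. Y j \<omega> \<in> B} = prob {\<omega> \<in> space M. Y 1 \<omega> \<in> B}"
proof -
  have "prob {\<omega> \<in> space M. Y j \<omega> \<in> B} = measure (distr M borel (Y j)) B"
    by (subst measure_distr) (use assms in \<open>auto intro!: arg_cong[where f=prob]\<close>)
  also have "\<dots> = measure (distr M borel (Y 1)) B" using ident by metis
  also have "\<dots> = prob {\<omega> \<in> space M. Y 1 \<omega> \<in> B}"
    by (subst measure_distr) (use assms in \<open>auto intro!: arg_cong[where f=prob]\<close>)
  finally show ?thesis .
qed

lemma G_int: "G x = (\<integral>\<omega>. indicator {\<omega> \<in> space M. \<bar>Y 1 \<omega>\<bar> > x} \<omega> \<partial>M)"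
  by (simp add: G_def Int_absorb2 subset_iff)

definition F :: "nat \<Rightarrow> real \<Rightarrow> real" where
  "F p x = (\<integral>\<omega>. (if \<bar>Y 1 \<omega>\<bar> \<le> x then \<bar>Y 1 \<omega>\<bar> ^ p else 0) \<partial>M)"

lemma F_integrable: "integrable M (\<lambda>\<omega>. if \<bar>Y 1 \<omega>\<bar> \<le> x then \<bar>Y 1 \<omega>\<bar> ^ p else 0)"
proof (rule integrable_const_bound[where B="\<bar>x\<bar> ^ p"])
  show "AE \<omega> in M. norm (if \<bar>Y 1 \<omega>\<bar> \<le> x then \<bar>Y 1 \<omega>\<bar> ^ p else 0) \<le> \<bar>x\<bar> ^ p"
    by (auto intro!: power_mono)
qed auto

lemma F_le: "x \<ge> 0 \<Longrightarrow> F p x \<le> x ^ p"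
proof -
  assume x: "x \<ge> 0"
  have "F p x \<le> (\<integral>\<omega>. x ^ p \<partial>M)"
    unfolding F_def using x by (intro integral_mono F_integrable) (auto intro!: power_mono)
  then show ?thesis by (simp add: prob_space)
qed

lemma ind_integrable: "integrable M (indicator {\<omega> \<in> space M. \<bar>Y 1 \<omega>\<bar> > y} :: 'a \<Rightarrow> real)"
  by (intro integrable_real_indicator) (auto simp: less_top[symmetric])

lemma F_step: assumes "y \<ge> 0" shows "F p (2 * y) \<le> F p y + (2 * y) ^ p * G y"
proof -
  have pw: "\<bar>Y 1 \<omega>\<bar> ^ p \<le> (2 * y) ^ p" if "\<bar>Y 1 \<omega>\<bar> \<le> 2 * y" for \<omega>
    using that by (intro power_mono) auto
  have "F p (2 * y) \<le> (\<integral>\<omega>. (if \<bar>Y 1 \<omega>\<bar> \<le> y then \<bar>Y 1 \<omega>\<bar> ^ p else 0)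
       + (2 * y) ^ p * indicator {\<omega> \<in> space M. \<bar>Y 1 \<omega>\<bar> > y} \<omega> \<partial>M)"
    unfolding F_def
    by (intro integral_mono F_integrable Bochner_Integration.integrable_add integrable_mult_right ind_integrable)
       (use pw assms in \<open>auto simp: indicator_def\<close>)
  also have "\<dots> = F p y + (2 * y) ^ p * G y"
    by (subst Bochner_Integration.integral_add)
       (auto simp: F_def G_int intro!: F_integrable integrable_mult_right ind_integrable)
  finally show ?thesis .
qed

lemma F_bound: assumes "real p > \<alpha>"
  shows "\<exists>A x0. A > 0 \<and> x0 > 0 \<and> (\<forall>y\<ge>x0. F p y \<le> A * y ^ p * G y)"
proof -
  define \<beta> where "\<beta> = (\<alpha> + real p) / 2"
  have b: "\<alpha> < \<beta>" "\<beta> < real p" using assms by (auto simp: \<beta>_def)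
  obtain x0 where x0: "x0 > 0" "\<And>y. y \<ge> x0 \<Longrightarrow> G y \<le> 2 powr \<beta> * G (2 * y)"
    using dbl_upper[OF b(1)] by auto
  have r: "2 powr \<beta> / 2 ^ p < 1"
  proof -
    have "2 powr \<beta> < 2 powr real p" using b by simp
    then show ?thesis by (simp add: powr_realpow)
  qed
  define A where "A = max (1 / G (2 * x0)) (2 powr \<beta> / (1 - 2 powr \<beta> / 2 ^ p))"
  have Gx0: "G (2 * x0) > 0" using G_pos x0 by auto
  have A0: "A > 0" using Gx0 r by (auto simp: A_def max_def)
  have key: "(A / 2 ^ p + 1) * 2 powr \<beta> \<le> A"
  proof -
    have "2 powr \<beta> = (2 powr \<beta> / (1 - 2 powr \<beta> / 2 ^ p)) * (1 - 2 powr \<beta> / 2 ^ p)"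
      using r by simp
    also have "\<dots> \<le> A * (1 - 2 powr \<beta> / 2 ^ p)"
      using r by (intro mult_right_mono) (auto simp: A_def)
    finally have "2 powr \<beta> \<le> A * (1 - 2 powr \<beta> / 2 ^ p)" .
    then show ?thesis by (simp add: field_simps)
  qed
  have ind: "\<forall>y. x0 \<le> y \<and> y \<le> 2 ^ Suc m * x0 \<longrightarrow> F p y \<le> A * y ^ p * G y" for m
  proof (induction m)
    case 0
    show ?case
    proof (intro allI impI)
      fix y assume y: "x0 \<le> y \<and> y \<le> 2 ^ Suc 0 * x0"
      have "F p y \<le> y ^ p" using F_le x0 y by auto
      also have "\<dots> = (1 / G (2 * x0)) * y ^ p * G (2 * x0)" using Gx0 y by simp
      also have "\<dots> \<le> (1 / G (2 * x0)) * y ^ p * G y"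
        using y x0 G_mono[of y "2 * x0"] Gx0 by (intro mult_left_mono) auto
      also have "\<dots> \<le> A * y ^ p * G y"
        using y x0 G_nonneg by (intro mult_right_mono) (auto simp: A_def)
      finally show "F p y \<le> A * y ^ p * G y" .
    qed
  next
    case (Suc m)
    show ?case
    proof (intro allI impI)
      fix y assume y: "x0 \<le> y \<and> y \<le> 2 ^ Suc (Suc m) * x0"
      show "F p y \<le> A * y ^ p * G y"
      proof (cases "y \<le> 2 ^ Suc m * x0")
        case True then show ?thesis using Suc y by auto
      next
        case False
        define z where "z = y / 2"
        have a: "x0 \<le> 2 ^ m * x0" using x0 by simp
        have b: "(2::real) ^ Suc m * x0 = 2 * (2 ^ m * x0)" by simp
        have "2 * x0 \<le> y" using False a b by linarith
        then have z: "x0 \<le> z" "z \<le> 2 ^ Suc m * x0" "y = 2 * z"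
          using False y x0 by (auto simp: z_def)
        have "F p y \<le> F p z + y ^ p * G z" using F_step[of z p] z x0 by simp
        also have "\<dots> \<le> A * z ^ p * G z + y ^ p * G z" using Suc z by auto
        also have "\<dots> = (A / 2 ^ p + 1) * y ^ p * G z" using z by (simp add: field_simps power_mult_distrib)
        also have "\<dots> \<le> (A / 2 ^ p + 1) * y ^ p * (2 powr \<beta> * G y)"
          using x0(2)[OF z(1)] z A0 x0 by (intro mult_left_mono) auto
        also have "\<dots> = ((A / 2 ^ p + 1) * 2 powr \<beta>) * y ^ p * G y" by simp
        also have "\<dots> \<le> A * y ^ p * G y"
          using key y x0 G_nonneg by (intro mult_right_mono) auto
        finally show ?thesis .
      qed
    qed
  qed
  have "F p y \<le> A * y ^ p * G y" if y: "x0 \<le> y" for y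
  proof -
    obtain m where "y / x0 < 2 ^ m" using real_arch_pow[of 2 "y / x0"] by auto
    then have "y \<le> 2 ^ m * x0" using x0 by (simp add: field_simps)
    moreover have "(2::real) ^ m * x0 \<le> 2 ^ Suc m * x0" using x0 by simp
    ultimately have "y \<le> 2 ^ Suc m * x0" by linarith
    then show ?thesis using ind y by auto
  qed
  then show ?thesis using A0 x0 by blast
qed

end


context setting begin

definition H :: "real \<Rightarrow> real" where
  "H x = (\<integral>\<omega>. (if \<bar>Y 1 \<omega>\<bar> > x then \<bar>Y 1 \<omega>\<bar> else 0) \<partial>M)"

lemma H_integrable: assumes "\<alpha> > 1"
  shows "integrable M (\<lambda>\<omega>. if \<bar>Y 1 \<omega>\<bar> > x then \<bar>Y 1 \<omega>\<bar> else 0)"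
proof (rule Bochner_Integration.integrable_bound[where f="Y 1"])
  show "integrable M (Y 1)" using mean0[OF assms] by blast
  show "AE \<omega> in M. norm (if \<bar>Y 1 \<omega>\<bar> > x then \<bar>Y 1 \<omega>\<bar> else 0) \<le> norm (Y 1 \<omega>)"
    by (rule AE_I2) simp
qed simp

lemma H_step: assumes "\<alpha> > 1" "y \<ge> 0" shows "H y \<le> 2 * y * G y + H (2 * y)"
proof -
  have "H y \<le> (\<integral>\<omega>. 2 * y * indicator {\<omega> \<in> space M. \<bar>Y 1 \<omega>\<bar> > y} \<omega>
       + (if \<bar>Y 1 \<omega>\<bar> > 2 * y then \<bar>Y 1 \<omega>\<bar> else 0) \<partial>M)"
    unfolding H_def
    by (intro integral_mono H_integrable[OF assms(1)] Bochner_Integration.integrable_add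
        integrable_mult_right ind_integrable)
       (use assms in \<open>auto simp: indicator_def\<close>)
  also have "\<dots> = 2 * y * G y + H (2 * y)"
    by (subst Bochner_Integration.integral_add)
       (auto simp: H_def G_int intro!: H_integrable[OF assms(1)] integrable_mult_right ind_integrable)
  finally show ?thesis .
qed

lemma H_lim: assumes "\<alpha> > 1" "y > 0" shows "(\<lambda>m. H (2 ^ m * y)) \<longlonglongrightarrow> 0"
proof -
  have intY: "integrable M (Y 1)" using mean0[OF assms(1)] by blast
  have "(\<lambda>m. \<integral>\<omega>. (if \<bar>Y 1 \<omega>\<bar> > 2 ^ m * y then \<bar>Y 1 \<omega>\<bar> else 0) \<partial>M) \<longlonglongrightarrow> (\<integral>\<omega>. (0::real) \<partial>M)"
  proof (rule integral_dominated_convergence[where w="\<lambda>\<omega>. \<bar>Y 1 \<omega>\<bar>"])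
    show "AE x in M. (\<lambda>m. if \<bar>Y 1 x\<bar> > 2 ^ m * y then \<bar>Y 1 x\<bar> else 0) \<longlonglongrightarrow> (0::real)"
    proof (rule AE_I2)
      fix x assume "x \<in> space M"
      obtain N where N: "\<bar>Y 1 x\<bar> / y < 2 ^ N" using real_arch_pow[of 2 "\<bar>Y 1 x\<bar> / y"] by auto
      have "\<forall>m\<ge>N. (if \<bar>Y 1 x\<bar> > 2 ^ m * y then \<bar>Y 1 x\<bar> else 0) = (0::real)"
      proof (intro allI impI)
        fix m assume "m \<ge> N"
        then have "(2::real) ^ N \<le> 2 ^ m" by simp
        then have "2 ^ N * y \<le> 2 ^ m * y" using assms by (intro mult_right_mono) auto
        moreover have "\<bar>Y 1 x\<bar> < 2 ^ N * y" using N assms by (simp add: field_simps)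
        ultimately have "\<bar>Y 1 x\<bar> < 2 ^ m * y" by linarith
        then show "(if \<bar>Y 1 x\<bar> > 2 ^ m * y then \<bar>Y 1 x\<bar> else 0) = (0::real)" by simp
      qed
      then show "(\<lambda>m. if \<bar>Y 1 x\<bar> > 2 ^ m * y then \<bar>Y 1 x\<bar> else 0) \<longlonglongrightarrow> (0::real)"
        by (intro tendsto_eventually) (unfold eventually_sequentially, blast)
    qed
  qed (use intY in auto)
  then show ?thesis by (simp add: H_def)
qed

lemma H_bound: assumes "\<alpha> > 1"
  shows "\<exists>A x0. A > 0 \<and> x0 > 0 \<and> (\<forall>y\<ge>x0. H y \<le> A * y * G y)"
proof -
  define \<beta> where "\<beta> = (1 + \<alpha>) / 2"
  have b: "\<beta> < \<alpha>" "1 < \<beta>" using assms by (auto simp: \<beta>_def)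
  obtain x0 where x0: "x0 > 0" "\<And>y. y \<ge> x0 \<Longrightarrow> G (2 * y) \<le> 2 powr (-\<beta>) * G y"
    using dbl_lower[OF b(1)] by auto
  have r: "2 powr (1 - \<beta>) < 1" using b by (simp add: powr_less_one)
  define K where "K = 2 / (1 - 2 powr (1 - \<beta>))"
  have K0: "K > 0" using r by (simp add: K_def)
  have Kid: "2 + K * 2 * 2 powr (-\<beta>) = K"
  proof -
    have "2 * 2 powr (-\<beta>) = 2 powr (1 - \<beta>)"
      by (simp add: powr_diff powr_minus divide_inverse)
    then have "2 + K * 2 * 2 powr (-\<beta>) = 2 + K * 2 powr (1 - \<beta>)" by (simp add: mult.assoc)
    also have "\<dots> = K"
    proof -
      have d: "1 - 2 powr (1 - \<beta>) \<noteq> 0" using r by linarith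
      show ?thesis unfolding K_def using d by (simp add: field_simps)
    qed
    finally show ?thesis .
  qed
  have Q: "\<forall>y\<ge>x0. H y - H (2 ^ m * y) \<le> K * y * G y" for m
  proof (induction m)
    case 0 then show ?case using K0 G_nonneg x0(1) by (auto intro!: mult_nonneg_nonneg)
  next
    case (Suc m)
    show ?case
    proof (intro allI impI)
      fix y assume y: "y \<ge> x0"
      have e: "(2::real) ^ Suc m * y = 2 ^ m * (2 * y)" by simp
      have "H y - H (2 ^ Suc m * y) = (H y - H (2 * y)) + (H (2 * y) - H (2 ^ m * (2 * y)))"
        unfolding e by simp
      also have "\<dots> \<le> 2 * y * G y + K * (2 * y) * G (2 * y)"
        using H_step[OF assms, of y] Suc[rule_format, of "2 * y"] y x0 by auto
      also have "\<dots> \<le> 2 * y * G y + K * (2 * y) * (2 powr (-\<beta>) * G y)"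
        using x0(2)[OF y] K0 y x0 by (intro add_left_mono mult_left_mono) auto
      also have "\<dots> = (2 + K * 2 * 2 powr (-\<beta>)) * y * G y" by (simp add: algebra_simps)
      also have "\<dots> = K * y * G y" using Kid by simp
      finally show "H y - H (2 ^ Suc m * y) \<le> K * y * G y" .
    qed
  qed
  have "H y \<le> K * y * G y" if y: "y \<ge> x0" for y
  proof -
    have "(\<lambda>m. K * y * G y + H (2 ^ m * y)) \<longlonglongrightarrow> K * y * G y + 0"
      using H_lim[OF assms, of y] y x0 by (intro tendsto_intros) auto
    then have "(\<lambda>m. K * y * G y + H (2 ^ m * y)) \<longlonglongrightarrow> K * y * G y" by simp
    then show ?thesis
    proof (rule LIMSEQ_le_const)
      show "\<exists>N. \<forall>n\<ge>N. H y \<le> K * y * G y + H (2 ^ n * y)"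
      proof (intro exI[of _ 0] allI impI)
        fix n :: nat
        have "H y - H (2 ^ n * y) \<le> K * y * G y" using Q[of n] y by blast
        then show "H y \<le> K * y * G y + H (2 ^ n * y)" by linarith
      qed
    qed
  qed
  then show ?thesis using K0 x0 by blast
qed

definition trunc :: "real \<Rightarrow> real \<Rightarrow> real" where
  "trunc c y = (if \<bar>c * y\<bar> \<le> 1 then c * y else 0)"

lemma trunc_meas[measurable]: "trunc c \<in> borel_measurable borel"
  unfolding trunc_def by measurable

definition tt :: "real \<Rightarrow> real" where
  "tt c = (if c = 0 then 0 else G (1 / \<bar>c\<bar>))"

lemma tt_nonneg: "tt c \<ge> 0" by (simp add: tt_def G_nonneg)

lemma symm_zero: assumes "\<alpha> = 1" shows "(\<integral>\<omega>. trunc c (Y 1 \<omega>) \<partial>M) = 0"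
proof -
  have "(\<integral>\<omega>. trunc c (Y 1 \<omega>) \<partial>M) = integral\<^sup>L (distr M borel (Y 1)) (trunc c)"
    using integral_distr[of "Y 1" M borel "trunc c"] by simp
  also have "\<dots> = integral\<^sup>L (distr M borel (\<lambda>\<omega>. - Y 1 \<omega>)) (trunc c)"
    using symm[OF assms] by simp
  also have "\<dots> = (\<integral>\<omega>. trunc c (- Y 1 \<omega>) \<partial>M)"
    using integral_distr[of "\<lambda>\<omega>. - Y 1 \<omega>" M borel "trunc c"] by simp
  also have "\<dots> = (\<integral>\<omega>. - trunc c (Y 1 \<omega>) \<partial>M)"
    by (intro Bochner_Integration.integral_cong refl) (simp add: trunc_def)
  also have "\<dots> = - (\<integral>\<omega>. trunc c (Y 1 \<omega>) \<partial>M)" by simp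
  finally show ?thesis by simp
qed

lemma trunc_integrable: "integrable M (\<lambda>\<omega>. trunc c (Y j \<omega>))"
  by (rule integrable_const_bound[where B=1]) (auto simp: trunc_def)

lemma trunc_sq_le: "(trunc c y)^2 \<le> 1"
proof (cases "\<bar>c * y\<bar> \<le> 1")
  case True
  then have "\<bar>c * y\<bar> ^ 2 \<le> 1 ^ 2" by (intro power_mono) auto
  then show ?thesis using True by (simp add: trunc_def)
qed (simp add: trunc_def)

lemma trunc2_integrable: "integrable M (\<lambda>\<omega>. (trunc c (Y j \<omega>))^2)"
  by (rule integrable_const_bound[where B=1]) (auto simp: trunc_sq_le)

end


context setting begin

lemma trunc_iff: fixes c y :: real assumes "c \<noteq> 0" shows "\<bar>c * y\<bar> \<le> 1 \<longleftrightarrow> \<bar>y\<bar> \<le> 1 / \<bar>c\<bar>"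
proof -
  have "\<bar>c\<bar> > 0" using assms by simp
  then have "\<bar>y\<bar> \<le> 1 / \<bar>c\<bar> \<longleftrightarrow> \<bar>y\<bar> * \<bar>c\<bar> \<le> 1" by (simp add: pos_le_divide_eq)
  then show ?thesis by (simp add: abs_mult mult.commute)
qed

lemma trunc_alt: fixes c y :: real assumes "c \<noteq> 0" shows "trunc c y = (if \<bar>y\<bar> \<le> 1 / \<bar>c\<bar> then c * y else 0)"
  unfolding trunc_def using trunc_iff[OF assms] by simp

lemma sq_moment: assumes "c \<noteq> 0"
  shows "(\<integral>\<omega>. (trunc c (Y 1 \<omega>))^2 \<partial>M) = c^2 * F 2 (1 / \<bar>c\<bar>)"
proof -
  have "(\<integral>\<omega>. (trunc c (Y 1 \<omega>))^2 \<partial>M) = (\<integral>\<omega>. c^2 * (if \<bar>Y 1 \<omega>\<bar> \<le> 1 / \<bar>c\<bar> then \<bar>Y 1 \<omega>\<bar> ^ 2 else 0) \<partial>M)"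
    by (intro Bochner_Integration.integral_cong refl)
       (simp add: trunc_alt[OF assms] power_mult_distrib)
  also have "\<dots> = c^2 * F 2 (1 / \<bar>c\<bar>)" by (simp add: F_def)
  finally show ?thesis .
qed

lemma abs_moment: assumes "c \<noteq> 0"
  shows "\<bar>\<integral>\<omega>. trunc c (Y 1 \<omega>) \<partial>M\<bar> \<le> \<bar>c\<bar> * F 1 (1 / \<bar>c\<bar>)"
proof -
  have "\<bar>\<integral>\<omega>. trunc c (Y 1 \<omega>) \<partial>M\<bar> \<le> (\<integral>\<omega>. \<bar>trunc c (Y 1 \<omega>)\<bar> \<partial>M)"
    by (rule integral_abs_bound)
  also have "\<dots> = (\<integral>\<omega>. \<bar>c\<bar> * (if \<bar>Y 1 \<omega>\<bar> \<le> 1 / \<bar>c\<bar> then \<bar>Y 1 \<omega>\<bar> ^ 1 else 0) \<partial>M)"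
    by (intro Bochner_Integration.integral_cong refl)
       (simp add: trunc_alt[OF assms] abs_mult)
  also have "\<dots> = \<bar>c\<bar> * F 1 (1 / \<bar>c\<bar>)" unfolding F_def by simp
  finally show ?thesis .
qed

lemma big_moment: assumes "c \<noteq> 0" "\<alpha> > 1"
  shows "\<bar>\<integral>\<omega>. trunc c (Y 1 \<omega>) \<partial>M\<bar> \<le> \<bar>c\<bar> * H (1 / \<bar>c\<bar>)"
proof -
  define x where "x = 1 / \<bar>c\<bar>"
  have intY: "integrable M (Y 1)" and m0: "(\<integral>\<omega>. Y 1 \<omega> \<partial>M) = 0" using mean0[OF assms(2)] by auto
  have intR: "integrable M (\<lambda>\<omega>. if \<bar>Y 1 \<omega>\<bar> > x then Y 1 \<omega> else 0)"
  proof (rule Bochner_Integration.integrable_bound[where f="Y 1"])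
    show "AE \<omega> in M. norm (if \<bar>Y 1 \<omega>\<bar> > x then Y 1 \<omega> else 0) \<le> norm (Y 1 \<omega>)"
      by (rule AE_I2) simp
  qed (use intY in simp_all)
  have "(\<integral>\<omega>. trunc c (Y 1 \<omega>) \<partial>M) = (\<integral>\<omega>. c * Y 1 \<omega> - c * (if \<bar>Y 1 \<omega>\<bar> > x then Y 1 \<omega> else 0) \<partial>M)"
    by (intro Bochner_Integration.integral_cong refl)
       (auto simp: trunc_alt[OF assms(1)] x_def)
  also have "\<dots> = c * (\<integral>\<omega>. Y 1 \<omega> \<partial>M) - c * (\<integral>\<omega>. (if \<bar>Y 1 \<omega>\<bar> > x then Y 1 \<omega> else 0) \<partial>M)"
    using intY intR by simp
  also have "\<dots> = - c * (\<integral>\<omega>. (if \<bar>Y 1 \<omega>\<bar> > x then Y 1 \<omega> else 0) \<partial>M)" using m0 by simp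
  finally have eq: "(\<integral>\<omega>. trunc c (Y 1 \<omega>) \<partial>M) = - c * (\<integral>\<omega>. (if \<bar>Y 1 \<omega>\<bar> > x then Y 1 \<omega> else 0) \<partial>M)" .
  have "\<bar>\<integral>\<omega>. (if \<bar>Y 1 \<omega>\<bar> > x then Y 1 \<omega> else 0) \<partial>M\<bar> \<le> (\<integral>\<omega>. \<bar>if \<bar>Y 1 \<omega>\<bar> > x then Y 1 \<omega> else 0\<bar> \<partial>M)"
    by (rule integral_abs_bound)
  also have "\<dots> = H x"
    unfolding H_def by (intro Bochner_Integration.integral_cong refl) simp
  finally have hb: "\<bar>\<integral>\<omega>. (if \<bar>Y 1 \<omega>\<bar> > x then Y 1 \<omega> else 0) \<partial>M\<bar> \<le> H x" .
  have "\<bar>\<integral>\<omega>. trunc c (Y 1 \<omega>) \<partial>M\<bar> = \<bar>c\<bar> * \<bar>\<integral>\<omega>. (if \<bar>Y 1 \<omega>\<bar> > x then Y 1 \<omega> else 0) \<partial>M\<bar>"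
    unfolding eq by (simp add: abs_mult)
  also have "\<dots> \<le> \<bar>c\<bar> * H x" using hb by (intro mult_left_mono) auto
  finally show ?thesis by (simp add: x_def)
qed

lemma mean_bound:
  shows "\<exists>A x1. A > 0 \<and> x1 > 0 \<and> (\<forall>c. c \<noteq> 0 \<and> 1 / \<bar>c\<bar> \<ge> x1 \<longrightarrow>
     \<bar>\<integral>\<omega>. trunc c (Y 1 \<omega>) \<partial>M\<bar> \<le> A * G (1 / \<bar>c\<bar>))"
proof (cases "\<alpha> < 1")
  case True
  then obtain A x0 where A: "A > 0" "x0 > 0" "\<forall>y\<ge>x0. F 1 y \<le> A * y ^ 1 * G y"
    using F_bound[of 1] by auto
  have "\<bar>\<integral>\<omega>. trunc c (Y 1 \<omega>) \<partial>M\<bar> \<le> A * G (1 / \<bar>c\<bar>)" if c: "c \<noteq> 0 \<and> 1 / \<bar>c\<bar> \<ge> x0" for c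
  proof -
    have "\<bar>\<integral>\<omega>. trunc c (Y 1 \<omega>) \<partial>M\<bar> \<le> \<bar>c\<bar> * F 1 (1 / \<bar>c\<bar>)" using abs_moment c by blast
    also have "\<dots> \<le> \<bar>c\<bar> * (A * (1 / \<bar>c\<bar>) ^ 1 * G (1 / \<bar>c\<bar>))"
      using A(3) c by (intro mult_left_mono) auto
    also have "\<dots> = A * G (1 / \<bar>c\<bar>)" using c by simp
    finally show ?thesis .
  qed
  then show ?thesis using A(1,2) by blast
next
  case False
  show ?thesis
  proof (cases "\<alpha> = 1")
    case True
    show ?thesis
      by (intro exI[of _ 1] exI[of _ 1]) (simp add: symm_zero[OF True] G_nonneg)
  next
    case False
    then have a1: "\<alpha> > 1" using \<open>\<not> \<alpha> < 1\<close> by simp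
    then obtain A x0 where A: "A > 0" "x0 > 0" "\<forall>y\<ge>x0. H y \<le> A * y * G y"
      using H_bound by auto
    have "\<bar>\<integral>\<omega>. trunc c (Y 1 \<omega>) \<partial>M\<bar> \<le> A * G (1 / \<bar>c\<bar>)" if c: "c \<noteq> 0 \<and> 1 / \<bar>c\<bar> \<ge> x0" for c
    proof -
      have "\<bar>\<integral>\<omega>. trunc c (Y 1 \<omega>) \<partial>M\<bar> \<le> \<bar>c\<bar> * H (1 / \<bar>c\<bar>)" using big_moment c a1 by blast
      also have "\<dots> \<le> \<bar>c\<bar> * (A * (1 / \<bar>c\<bar>) * G (1 / \<bar>c\<bar>))"
        using A(3) c by (intro mult_left_mono) auto
      also have "\<dots> = A * G (1 / \<bar>c\<bar>)" using c by simp
      finally show ?thesis .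
    qed
    then show ?thesis using A(1,2) by blast
  qed
qed

lemma moments:
  shows "\<exists>A \<gamma>. A > 0 \<and> \<gamma> > 0 \<and> (\<forall>c j. \<bar>c\<bar> \<le> \<gamma> \<longrightarrow>
     (\<integral>\<omega>. (trunc c (Y j \<omega>))^2 \<partial>M) \<le> A * tt c \<and> \<bar>\<integral>\<omega>. trunc c (Y j \<omega>) \<partial>M\<bar> \<le> A * tt c)"
proof -
  obtain A2 x2 where A2: "A2 > 0" "x2 > 0" "\<forall>y\<ge>x2. F 2 y \<le> A2 * y ^ 2 * G y"
    using F_bound[of 2] alpha by auto
  obtain A1 x1 where A1: "A1 > 0" "x1 > 0" "\<forall>c. c \<noteq> 0 \<and> 1 / \<bar>c\<bar> \<ge> x1 \<longrightarrow>
     \<bar>\<integral>\<omega>. trunc c (Y 1 \<omega>) \<partial>M\<bar> \<le> A1 * G (1 / \<bar>c\<bar>)"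
    using mean_bound by blast
  define A where "A = max A1 A2"
  define \<gamma> where "\<gamma> = 1 / max x1 x2"
  have g: "\<gamma> > 0" using A1 A2 by (simp add: \<gamma>_def)
  have "(\<integral>\<omega>. (trunc c (Y j \<omega>))^2 \<partial>M) \<le> A * tt c \<and> \<bar>\<integral>\<omega>. trunc c (Y j \<omega>) \<partial>M\<bar> \<le> A * tt c"
    if c: "\<bar>c\<bar> \<le> \<gamma>" for c j
  proof (cases "c = 0")
    case True then show ?thesis by (simp add: tt_def trunc_def)
  next
    case False
    have x: "1 / \<bar>c\<bar> \<ge> max x1 x2"
    proof -
      have m: "max x1 x2 > 0" using A1 A2 by simp
      have "\<bar>c\<bar> \<le> 1 / max x1 x2" using c by (simp add: \<gamma>_def)
      then have "\<bar>c\<bar> * max x1 x2 \<le> 1" using m by (simp add: pos_le_divide_eq)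
      moreover have cpos: "\<bar>c\<bar> > 0" using False by simp
      moreover have "max x1 x2 \<le> 1 / \<bar>c\<bar> \<longleftrightarrow> max x1 x2 * \<bar>c\<bar> \<le> 1"
        using cpos by (rule pos_le_divide_eq)
      ultimately show ?thesis by (metis mult.commute)
    qed
    have tr1: "(\<integral>\<omega>. (trunc c (Y j \<omega>))^2 \<partial>M) = (\<integral>\<omega>. (trunc c (Y 1 \<omega>))^2 \<partial>M)"
      by (rule int_transfer) simp
    have tr2: "(\<integral>\<omega>. trunc c (Y j \<omega>) \<partial>M) = (\<integral>\<omega>. trunc c (Y 1 \<omega>) \<partial>M)"
      by (rule int_transfer) simp
    have Gn: "G (1 / \<bar>c\<bar>) \<ge> 0" by (rule G_nonneg)
    have "(\<integral>\<omega>. (trunc c (Y 1 \<omega>))^2 \<partial>M) = c^2 * F 2 (1 / \<bar>c\<bar>)" by (rule sq_moment[OF False])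
    also have "\<dots> \<le> c^2 * (A2 * (1 / \<bar>c\<bar>) ^ 2 * G (1 / \<bar>c\<bar>))"
      using A2(3) x by (intro mult_left_mono) auto
    also have "\<dots> = A2 * G (1 / \<bar>c\<bar>)" using False by (simp add: power_divide field_simps)
    also have "\<dots> \<le> A * tt c" using False Gn by (auto simp: A_def tt_def intro!: mult_right_mono)
    finally have s1: "(\<integral>\<omega>. (trunc c (Y j \<omega>))^2 \<partial>M) \<le> A * tt c" using tr1 by simp
    have "\<bar>\<integral>\<omega>. trunc c (Y 1 \<omega>) \<partial>M\<bar> \<le> A1 * G (1 / \<bar>c\<bar>)" using A1(3) False x by auto
    also have "\<dots> \<le> A * tt c" using False Gn by (auto simp: A_def tt_def intro!: mult_right_mono)
    finally have s2: "\<bar>\<integral>\<omega>. trunc c (Y j \<omega>) \<partial>M\<bar> \<le> A * tt c" using tr2 by simp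
    show ?thesis using s1 s2 by blast
  qed
  moreover have "A > 0" using A1 by (simp add: A_def)
  ultimately show ?thesis using g by blast
qed

end


context setting begin

lemma tt_prob: "prob {\<omega> \<in> space M. \<bar>c * Y j \<omega>\<bar> > 1} = tt c"
proof (cases "c = 0")
  case True then show ?thesis by (simp add: tt_def)
next
  case False
  have "{\<omega> \<in> space M. \<bar>c * Y j \<omega>\<bar> > 1} = {\<omega> \<in> space M. Y j \<omega> \<in> {y. \<bar>y\<bar> > 1 / \<bar>c\<bar>}}"
    using trunc_iff[OF False] by (auto simp: not_le[symmetric])
  moreover have "{\<omega> \<in> space M. Y 1 \<omega> \<in> {y. \<bar>y\<bar> > 1 / \<bar>c\<bar>}} = {\<omega> \<in> space M. \<bar>Y 1 \<omega>\<bar> > 1 / \<bar>c\<bar>}"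
    by auto
  ultimately show ?thesis using prob_transfer[of "{y. \<bar>y\<bar> > 1 / \<bar>c\<bar>}" j] False
    by (simp add: tt_def G_def)
qed

definition T :: "(int \<Rightarrow> real) \<Rightarrow> int \<Rightarrow> 'a \<Rightarrow> real" where
  "T c i \<omega> = trunc (c i) (Y i \<omega>)"

lemma T_meas[measurable]: "T c i \<in> borel_measurable M"
  unfolding T_def by measurable

lemma T_bounded: "\<bar>T c i \<omega>\<bar> \<le> 1"
  by (simp add: T_def trunc_def)

lemma T_indep: "indep_vars (\<lambda>_. borel) (T c) UNIV"
  unfolding T_def by (rule indep_vars_compose2[OF indep]) simp

lemma T_prod_int: "integrable M (\<lambda>\<omega>. T c i \<omega> * T c j \<omega>)"
proof (rule integrable_const_bound[where B=1])
  show "AE \<omega> in M. norm (T c i \<omega> * T c j \<omega>) \<le> 1"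
    using T_bounded by (auto simp: abs_mult intro!: mult_le_one)
qed simp

lemma T_int: "integrable M (T c i)"
  by (rule integrable_const_bound[where B=1]) (use T_bounded in auto)

lemma T_cross: assumes "i \<noteq> j"
  shows "(\<integral>\<omega>. T c i \<omega> * T c j \<omega> \<partial>M) = (\<integral>\<omega>. T c i \<omega> \<partial>M) * (\<integral>\<omega>. T c j \<omega> \<partial>M)"
proof -
  have ind: "indep_vars (\<lambda>_. borel) (T c) {i, j}"
    by (rule indep_vars_subset[OF T_indep]) simp
  have "(\<integral>\<omega>. (\<Prod>k\<in>{i,j}. T c k \<omega>) \<partial>M) = (\<Prod>k\<in>{i,j}. \<integral>\<omega>. T c k \<omega> \<partial>M)"
    by (rule indep_vars_lebesgue_integral) (use ind T_int in auto)
  then show ?thesis using assms by simp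
qed

lemma second_moment_sum: assumes "finite I"
  shows "(\<integral>\<omega>. (\<Sum>i\<in>I. T c i \<omega>)^2 \<partial>M) \<le>
     (\<Sum>i\<in>I. \<integral>\<omega>. (T c i \<omega>)^2 \<partial>M) + (\<Sum>i\<in>I. \<bar>\<integral>\<omega>. T c i \<omega> \<partial>M\<bar>)^2"
proof -
  have "(\<integral>\<omega>. (\<Sum>i\<in>I. T c i \<omega>)^2 \<partial>M) = (\<integral>\<omega>. (\<Sum>i\<in>I. \<Sum>j\<in>I. T c i \<omega> * T c j \<omega>) \<partial>M)"
    by (simp add: power2_eq_square sum_product)
  also have "\<dots> = (\<Sum>i\<in>I. \<Sum>j\<in>I. \<integral>\<omega>. T c i \<omega> * T c j \<omega> \<partial>M)"
    by (simp add: T_prod_int Bochner_Integration.integrable_sum)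
  also have "\<dots> \<le> (\<Sum>i\<in>I. \<Sum>j\<in>I. (if i = j then \<integral>\<omega>. (T c i \<omega>)^2 \<partial>M else 0)
                   + \<bar>\<integral>\<omega>. T c i \<omega> \<partial>M\<bar> * \<bar>\<integral>\<omega>. T c j \<omega> \<partial>M\<bar>)"
  proof (intro sum_mono)
    fix i j
    show "(\<integral>\<omega>. T c i \<omega> * T c j \<omega> \<partial>M) \<le> (if i = j then \<integral>\<omega>. (T c i \<omega>)^2 \<partial>M else 0)
                   + \<bar>\<integral>\<omega>. T c i \<omega> \<partial>M\<bar> * \<bar>\<integral>\<omega>. T c j \<omega> \<partial>M\<bar>"
    proof (cases "i = j")
      case True then show ?thesis by (simp add: power2_eq_square)
    next
      case False
      then show ?thesis using T_cross[OF False, of c] by (simp add: abs_mult[symmetric])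
    qed
  qed
  also have "\<dots> = (\<Sum>i\<in>I. \<Sum>j\<in>I. (if i = j then \<integral>\<omega>. (T c i \<omega>)^2 \<partial>M else 0))
                   + (\<Sum>i\<in>I. \<Sum>j\<in>I. \<bar>\<integral>\<omega>. T c i \<omega> \<partial>M\<bar> * \<bar>\<integral>\<omega>. T c j \<omega> \<partial>M\<bar>)"
    by (simp only: sum.distrib)
  also have "(\<Sum>i\<in>I. \<Sum>j\<in>I. (if i = j then \<integral>\<omega>. (T c i \<omega>)^2 \<partial>M else 0)) = (\<Sum>i\<in>I. \<integral>\<omega>. (T c i \<omega>)^2 \<partial>M)"
  proof (intro sum.cong refl)
    fix i assume "i \<in> I"
    then show "(\<Sum>j\<in>I. (if i = j then \<integral>\<omega>. (T c i \<omega>)^2 \<partial>M else 0)) = (\<integral>\<omega>. (T c i \<omega>)^2 \<partial>M)"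
      using assms by (simp add: sum.delta)
  qed
  also have "(\<Sum>i\<in>I. \<Sum>j\<in>I. \<bar>\<integral>\<omega>. T c i \<omega> \<partial>M\<bar> * \<bar>\<integral>\<omega>. T c j \<omega> \<partial>M\<bar>) = (\<Sum>i\<in>I. \<bar>\<integral>\<omega>. T c i \<omega> \<partial>M\<bar>)^2"
    by (simp add: power2_eq_square sum_product)
  finally show ?thesis .
qed

lemma sum_bound:
  assumes A: "A > 0" and mom: "\<forall>j. (\<integral>\<omega>. (trunc (c j) (Y j \<omega>))^2 \<partial>M) \<le> A * tt (c j)
        \<and> \<bar>\<integral>\<omega>. trunc (c j) (Y j \<omega>) \<partial>M\<bar> \<le> A * tt (c j)"
    and I: "finite I" and e: "\<epsilon> > 0"
  shows "prob {\<omega> \<in> space M. \<bar>\<Sum>j\<in>I. c j * Y j \<omega>\<bar> > \<epsilon>} \<le>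
     (\<Sum>j\<in>I. tt (c j)) + (A * (\<Sum>j\<in>I. tt (c j)) + (A * (\<Sum>j\<in>I. tt (c j)))^2) / \<epsilon>^2"
proof -
  define s where "s = (\<Sum>j\<in>I. tt (c j))"
  have incl: "{\<omega> \<in> space M. \<bar>\<Sum>j\<in>I. c j * Y j \<omega>\<bar> > \<epsilon>} \<subseteq>
     (\<Union>j\<in>I. {\<omega> \<in> space M. \<bar>c j * Y j \<omega>\<bar> > 1}) \<union> {\<omega> \<in> space M. \<bar>\<Sum>j\<in>I. T c j \<omega>\<bar> \<ge> \<epsilon>}"
  proof
    fix \<omega> assume w: "\<omega> \<in> {\<omega> \<in> space M. \<bar>\<Sum>j\<in>I. c j * Y j \<omega>\<bar> > \<epsilon>}"
    show "\<omega> \<in> (\<Union>j\<in>I. {\<omega> \<in> space M. \<bar>c j * Y j \<omega>\<bar> > 1}) \<union> {\<omega> \<in> space M. \<bar>\<Sum>j\<in>I. T c j \<omega>\<bar> \<ge> \<epsilon>}"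
    proof (cases "\<exists>j\<in>I. \<bar>c j * Y j \<omega>\<bar> > 1")
      case True then show ?thesis using w by auto
    next
      case False
      then have "(\<Sum>j\<in>I. T c j \<omega>) = (\<Sum>j\<in>I. c j * Y j \<omega>)"
        by (intro sum.cong refl) (auto simp: T_def trunc_def not_less)
      then show ?thesis using w by auto
    qed
  qed
  have "prob {\<omega> \<in> space M. \<bar>\<Sum>j\<in>I. c j * Y j \<omega>\<bar> > \<epsilon>} \<le>
     prob ((\<Union>j\<in>I. {\<omega> \<in> space M. \<bar>c j * Y j \<omega>\<bar> > 1}) \<union> {\<omega> \<in> space M. \<bar>\<Sum>j\<in>I. T c j \<omega>\<bar> \<ge> \<epsilon>})"
    using incl I by (intro finite_measure_mono) auto
  also have "\<dots> \<le> prob (\<Union>j\<in>I. {\<omega> \<in> space M. \<bar>c j * Y j \<omega>\<bar> > 1}) + prob {\<omega> \<in> space M. \<bar>\<Sum>j\<in>I. T c j \<omega>\<bar> \<ge> \<epsilon>}"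
    using I by (intro measure_Un_le) auto
  also have "prob (\<Union>j\<in>I. {\<omega> \<in> space M. \<bar>c j * Y j \<omega>\<bar> > 1}) \<le> (\<Sum>j\<in>I. prob {\<omega> \<in> space M. \<bar>c j * Y j \<omega>\<bar> > 1})"
    using I by (intro finite_measure_subadditive_finite) auto
  also have "(\<Sum>j\<in>I. prob {\<omega> \<in> space M. \<bar>c j * Y j \<omega>\<bar> > 1}) = s"
    by (simp add: s_def tt_prob)
  also have "prob {\<omega> \<in> space M. \<bar>\<Sum>j\<in>I. T c j \<omega>\<bar> \<ge> \<epsilon>} \<le> (\<integral>\<omega>. (\<Sum>j\<in>I. T c j \<omega>)^2 \<partial>M) / \<epsilon>^2"
  proof (rule second_moment_method)
    show "integrable M (\<lambda>x. (\<Sum>j\<in>I. T c j x)^2)"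
      by (simp add: power2_eq_square sum_product T_prod_int Bochner_Integration.integrable_sum)
  qed (use e in auto)
  also have "(\<integral>\<omega>. (\<Sum>j\<in>I. T c j \<omega>)^2 \<partial>M) \<le> A * s + (A * s)^2"
  proof -
    have "(\<Sum>i\<in>I. \<integral>\<omega>. (T c i \<omega>)^2 \<partial>M) \<le> (\<Sum>i\<in>I. A * tt (c i))"
      using mom by (intro sum_mono) (simp add: T_def)
    moreover have "(\<Sum>i\<in>I. \<bar>\<integral>\<omega>. T c i \<omega> \<partial>M\<bar>) \<le> (\<Sum>i\<in>I. A * tt (c i))"
      using mom by (intro sum_mono) (simp add: T_def)
    moreover have "0 \<le> (\<Sum>i\<in>I. \<bar>\<integral>\<omega>. T c i \<omega> \<partial>M\<bar>)" by (intro sum_nonneg) simp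
    ultimately have "(\<Sum>i\<in>I. \<integral>\<omega>. (T c i \<omega>)^2 \<partial>M) + (\<Sum>i\<in>I. \<bar>\<integral>\<omega>. T c i \<omega> \<partial>M\<bar>)^2 \<le> A * s + (A * s)^2"
      by (intro add_mono power_mono) (auto simp: s_def sum_distrib_left)
    then show ?thesis using second_moment_sum[OF I, of c] by linarith
  qed
  finally show ?thesis using e by (simp add: s_def divide_right_mono)
qed

end


context setting begin

lemma tt_eq: "tt = tail_term \<alpha> h"
proof
  fix c show "tt c = tail_term \<alpha> h c"
  proof (cases "c = 0")
    case True then show ?thesis by (simp add: tt_def tail_term_def)
  next
    case False
    then have p: "1 / \<bar>c\<bar> > 0" by simp
    have "G (1 / \<bar>c\<bar>) = (1 / \<bar>c\<bar>) powr (-\<alpha>) * h (1 / \<bar>c\<bar>)"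
      using tail p by (simp add: G_def)
    also have "(1 / \<bar>c\<bar>) powr (-\<alpha>) = \<bar>c\<bar> powr \<alpha>"
      using False by (simp add: powr_minus powr_divide)
    finally show ?thesis using False by (simp add: tt_def tail_term_def)
  qed
qed

lemma ae_to_prob:
  fixes S :: "nat \<Rightarrow> 'a \<Rightarrow> real"
  assumes [measurable]: "\<And>N. S N \<in> borel_measurable M" "W \<in> borel_measurable M"
    and ae: "AE \<omega> in M. (\<lambda>N. S N \<omega>) \<longlonglongrightarrow> W \<omega>" and e: "e > 0"
  shows "(\<lambda>N. prob {\<omega> \<in> space M. \<bar>S N \<omega> - W \<omega>\<bar> > e}) \<longlonglongrightarrow> 0"
proof -
  have "(\<lambda>N. \<integral>\<omega>. indicator {\<omega> \<in> space M. \<bar>S N \<omega> - W \<omega>\<bar> > e} \<omega> \<partial>M) \<longlonglongrightarrow> (\<integral>\<omega>. (0::real) \<partial>M)"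
  proof (rule integral_dominated_convergence[where w="\<lambda>_. 1"])
    show "AE x in M. (\<lambda>i. indicator {\<omega> \<in> space M. \<bar>S i \<omega> - W \<omega>\<bar> > e} x) \<longlonglongrightarrow> (0::real)"
      using ae
    proof eventually_elim
      case (elim x)
      then have "\<forall>\<^sub>F N in sequentially. dist (S N x) (W x) < e"
        using e by (rule tendstoD)
      then have "\<forall>\<^sub>F N in sequentially. indicator {\<omega> \<in> space M. \<bar>S N \<omega> - W \<omega>\<bar> > e} x = (0::real)"
        by eventually_elim (auto simp: indicator_def dist_real_def)
      then show ?case by (rule tendsto_eventually)
    qed
  qed (auto simp: indicator_def)
  then show ?thesis by (simp add: Int_absorb2 subset_iff)
qed

lemma tt_le_infsum:
  fixes f :: "int \<Rightarrow> real"
  assumes "f summable_on UNIV" "\<And>j. f j \<ge> 0" "finite Q"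
  shows "sum f Q \<le> infsum f UNIV"
  using finite_sum_le_infsum[of f UNIV Q] assms by auto

lemma backward:
  fixes c :: "nat \<Rightarrow> int \<Rightarrow> real" and V :: "nat \<Rightarrow> 'a \<Rightarrow> real"
  assumes csum: "\<forall>n. (\<lambda>j. tt (c n j)) summable_on UNIV"
    and Vmeas: "\<forall>n. V n \<in> borel_measurable M"
    and Vdef: "\<forall>n. AE \<omega> in M. (\<lambda>N. \<Sum>j\<in>{- int N..int N}. c n j * Y j \<omega>) \<longlonglongrightarrow> V n \<omega>"
    and lim: "(\<lambda>n. \<Sum>\<^sub>\<infinity>j. tt (c n j)) \<longlonglongrightarrow> 0"
  shows "tendsto_zero_in_prob V"
  unfolding tendsto_zero_in_prob_def
proof (intro allI impI)
  fix \<epsilon> :: real assume e: "\<epsilon> > 0"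
  obtain A \<gamma> where A: "A > 0" "\<gamma> > 0" and mom: "\<forall>c j. \<bar>c\<bar> \<le> \<gamma> \<longrightarrow>
     (\<integral>\<omega>. (trunc c (Y j \<omega>))^2 \<partial>M) \<le> A * tt c \<and> \<bar>\<integral>\<omega>. trunc c (Y j \<omega>) \<partial>M\<bar> \<le> A * tt c"
    using moments by blast
  define S where "S n = (\<Sum>\<^sub>\<infinity>j. tt (c n j))" for n
  define B where "B s = s + (A * s + (A * s)^2) / (\<epsilon>/2)^2" for s
  have G0: "G (1 / \<gamma>) > 0" using A G_pos by simp
  have ev: "\<forall>\<^sub>F n in sequentially. S n < G (1 / \<gamma>)"
    using order_tendstoD(2)[OF lim G0] by (simp add: S_def)
  have bound: "prob {\<omega> \<in> space M. \<bar>V n \<omega>\<bar> > \<epsilon>} \<le> B (S n)" if Sn: "S n < G (1 / \<gamma>)" for n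
  proof -
    have finsum: "(\<Sum>j\<in>Q. tt (c n j)) \<le> S n" if "finite Q" for Q
      unfolding S_def using csum that by (intro tt_le_infsum) (auto simp: tt_nonneg)
    have small: "\<bar>c n j\<bar> \<le> \<gamma>" for j
    proof (rule ccontr)
      assume "\<not> \<bar>c n j\<bar> \<le> \<gamma>"
      then have cj: "\<bar>c n j\<bar> > \<gamma>" "c n j \<noteq> 0" using A by auto
      then have "1 / \<bar>c n j\<bar> \<le> 1 / \<gamma>" using A by (simp add: frac_le)
      then have "G (1 / \<gamma>) \<le> tt (c n j)" using cj by (simp add: tt_def G_mono)
      also have "\<dots> \<le> S n" using finsum[of "{j}"] by simp
      finally show False using Sn by simp
    qed
    have momn: "\<forall>j. (\<integral>\<omega>. (trunc (c n j) (Y j \<omega>))^2 \<partial>M) \<le> A * tt (c n j)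
        \<and> \<bar>\<integral>\<omega>. trunc (c n j) (Y j \<omega>) \<partial>M\<bar> \<le> A * tt (c n j)"
      using mom small by blast
    define P where "P N = (\<lambda>\<omega>. \<Sum>j\<in>{- int N..int N}. c n j * Y j \<omega>)" for N
    have Pm[measurable]: "P N \<in> borel_measurable M" for N unfolding P_def by measurable
    have Vm[measurable]: "V n \<in> borel_measurable M" using Vmeas by blast
    have conv: "(\<lambda>N. prob {\<omega> \<in> space M. \<bar>P N \<omega> - V n \<omega>\<bar> > \<epsilon>/2}) \<longlonglongrightarrow> 0"
      by (rule ae_to_prob) (use Vdef e in \<open>auto simp: P_def\<close>)
    have Bmono: "B s \<le> B t" if "0 \<le> s" "s \<le> t" for s t
      unfolding B_def using that A e
      by (intro add_mono divide_right_mono power_mono mult_left_mono) auto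
    have step: "prob {\<omega> \<in> space M. \<bar>V n \<omega>\<bar> > \<epsilon>} \<le> prob {\<omega> \<in> space M. \<bar>P N \<omega> - V n \<omega>\<bar> > \<epsilon>/2} + B (S n)" for N
    proof -
      have "prob {\<omega> \<in> space M. \<bar>V n \<omega>\<bar> > \<epsilon>} \<le>
          prob ({\<omega> \<in> space M. \<bar>P N \<omega> - V n \<omega>\<bar> > \<epsilon>/2} \<union> {\<omega> \<in> space M. \<bar>P N \<omega>\<bar> > \<epsilon>/2})"
      proof (intro finite_measure_mono)
        show "{\<omega> \<in> space M. \<bar>V n \<omega>\<bar> > \<epsilon>} \<subseteq> {\<omega> \<in> space M. \<bar>P N \<omega> - V n \<omega>\<bar> > \<epsilon>/2} \<union> {\<omega> \<in> space M. \<bar>P N \<omega>\<bar> > \<epsilon>/2}"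
        proof
          fix x assume "x \<in> {\<omega> \<in> space M. \<bar>V n \<omega>\<bar> > \<epsilon>}"
          moreover have "\<bar>V n x\<bar> \<le> \<bar>P N x - V n x\<bar> + \<bar>P N x\<bar>" by linarith
          ultimately show "x \<in> {\<omega> \<in> space M. \<bar>P N \<omega> - V n \<omega>\<bar> > \<epsilon>/2} \<union> {\<omega> \<in> space M. \<bar>P N \<omega>\<bar> > \<epsilon>/2}"
            by auto
        qed
      qed auto
      also have "\<dots> \<le> prob {\<omega> \<in> space M. \<bar>P N \<omega> - V n \<omega>\<bar> > \<epsilon>/2} + prob {\<omega> \<in> space M. \<bar>P N \<omega>\<bar> > \<epsilon>/2}"
        by (intro measure_Un_le) auto
      also have "prob {\<omega> \<in> space M. \<bar>P N \<omega>\<bar> > \<epsilon>/2} \<le> B (\<Sum>j\<in>{- int N..int N}. tt (c n j))"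
        unfolding P_def B_def using sum_bound[OF A(1) momn, of "{- int N..int N}" "\<epsilon>/2"] e by simp
      also have "\<dots> \<le> B (S n)"
        by (intro Bmono finsum sum_nonneg tt_nonneg) auto
      finally show ?thesis by simp
    qed
    have "(\<lambda>N. prob {\<omega> \<in> space M. \<bar>P N \<omega> - V n \<omega>\<bar> > \<epsilon>/2} + B (S n)) \<longlonglongrightarrow> 0 + B (S n)"
      by (intro tendsto_intros conv)
    then have l2: "(\<lambda>N. prob {\<omega> \<in> space M. \<bar>P N \<omega> - V n \<omega>\<bar> > \<epsilon>/2} + B (S n)) \<longlonglongrightarrow> B (S n)"
      by simp
    show ?thesis
      by (rule LIMSEQ_le_const[OF l2]) (use step in blast)
  qed
  have BS: "(\<lambda>n. B (S n)) \<longlonglongrightarrow> B 0"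
  proof -
    have limS: "(\<lambda>n. S n) \<longlonglongrightarrow> 0" using lim unfolding S_def .
    show ?thesis unfolding B_def using e by (intro tendsto_intros limS) auto
  qed
  show "(\<lambda>n. prob {\<omega> \<in> space M. \<bar>V n \<omega>\<bar> > \<epsilon>}) \<longlonglongrightarrow> 0"
  proof (rule tendsto_sandwich[where f="\<lambda>_. 0" and h="\<lambda>n. B (S n)"])
    show "\<forall>\<^sub>F n in sequentially. 0 \<le> prob {\<omega> \<in> space M. \<bar>V n \<omega>\<bar> > \<epsilon>}" by simp
    show "\<forall>\<^sub>F n in sequentially. prob {\<omega> \<in> space M. \<bar>V n \<omega>\<bar> > \<epsilon>} \<le> B (S n)"
      using ev by eventually_elim (rule bound)
    show "(\<lambda>n. B (S n)) \<longlonglongrightarrow> 0" using BS by (simp add: B_def)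
  qed simp
qed

end


context setting begin

lemma noncon: assumes L: "L > 0"
  shows "\<exists>q>0. \<forall>u. prob {\<omega> \<in> space M. u \<le> Y 1 \<omega> \<and> Y 1 \<omega> \<le> u + L} \<le> 1 - q"
proof -
  obtain M0 where M0: "M0 > 0" "\<forall>x\<ge>M0. G x \<le> 1/2" using G_small[of "1/2"] by auto
  define q where "q = min (1/2) (G (M0 + L))"
  have q: "q > 0" using G_pos[of "M0 + L"] M0 L by (simp add: q_def)
  have "prob {\<omega> \<in> space M. u \<le> Y 1 \<omega> \<and> Y 1 \<omega> \<le> u + L} \<le> 1 - q" for u
  proof (cases "u > M0 \<or> u + L < - M0")
    case True
    have "prob {\<omega> \<in> space M. u \<le> Y 1 \<omega> \<and> Y 1 \<omega> \<le> u + L} \<le> G M0"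
      unfolding G_def using True by (intro finite_measure_mono) auto
    also have "\<dots> \<le> 1/2" using M0 by simp
    finally show ?thesis by (simp add: q_def)
  next
    case False
    have "prob {\<omega> \<in> space M. u \<le> Y 1 \<omega> \<and> Y 1 \<omega> \<le> u + L} \<le> prob (space M - {\<omega> \<in> space M. \<bar>Y 1 \<omega>\<bar> > M0 + L})"
      using False by (intro finite_measure_mono) auto
    also have "\<dots> = 1 - G (M0 + L)" unfolding G_def by (rule prob_compl) simp
    also have "\<dots> \<le> 1 - q" by (simp add: q_def)
    finally show ?thesis .
  qed
  then show ?thesis using q by blast
qed

lemma D_prob: assumes "0 < a" "a \<le> b"
  shows "prob {\<omega> \<in> space M. a < \<bar>Y 1 \<omega>\<bar> \<and> \<bar>Y 1 \<omega>\<bar> \<le> b} = G a - G b"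
proof -
  have "{\<omega> \<in> space M. a < \<bar>Y 1 \<omega>\<bar> \<and> \<bar>Y 1 \<omega>\<bar> \<le> b} =
     {\<omega> \<in> space M. \<bar>Y 1 \<omega>\<bar> > a} - {\<omega> \<in> space M. \<bar>Y 1 \<omega>\<bar> > b}" by auto
  moreover have "prob ({\<omega> \<in> space M. \<bar>Y 1 \<omega>\<bar> > a} - {\<omega> \<in> space M. \<bar>Y 1 \<omega>\<bar> > b}) = G a - G b"
    unfolding G_def using assms by (intro finite_measure_Diff) auto
  ultimately show ?thesis by simp
qed

lemma concen:
  "\<exists>\<delta>>0. \<delta> < 1 \<and> (\<exists>x1>0. \<forall>T\<ge>x1. \<forall>u.
     prob {\<omega> \<in> space M. u \<le> Y 1 \<omega> \<and> Y 1 \<omega> \<le> u + \<delta> * T \<and> \<bar>Y 1 \<omega>\<bar> > T} \<le> G T / 4)"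
proof -
  have l1: "((\<lambda>d. ((1 + d) / (1 - d)) powr (-\<alpha>)) \<longlongrightarrow> ((1 + 0) / (1 - 0)) powr (-\<alpha>)) (at (0::real))"
    by (intro tendsto_intros) auto
  have l2: "((\<lambda>d. (1 - d) powr (-\<alpha>)) \<longlongrightarrow> (1 - 0) powr (-\<alpha>)) (at (0::real))"
    by (intro tendsto_intros) auto
  have e1: "\<forall>\<^sub>F d in at 0. ((1 + d) / (1 - d)) powr (-\<alpha>) > 31/32"
    by (rule order_tendstoD(1)[OF l1[simplified]]) simp
  have e2: "\<forall>\<^sub>F d in at 0. (1 - d) powr (-\<alpha>) < 2"
    by (rule order_tendstoD(2)[OF l2[simplified]]) simp
  obtain d0 where d0: "d0 > 0" "\<And>x::real. x \<noteq> 0 \<Longrightarrow> dist x 0 < d0 \<Longrightarrow>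
     ((1 + x) / (1 - x)) powr (-\<alpha>) > 31/32 \<and> (1 - x) powr (-\<alpha>) < 2"
    using eventually_conj[OF e1 e2] unfolding eventually_at by auto
  define \<delta> where "\<delta> = min (d0/2) (1/2)"
  have \<delta>: "0 < \<delta>" "\<delta> < 1" "\<delta> \<le> 1/2" using d0 by (auto simp: \<delta>_def)
  have dp: "((1 + \<delta>) / (1 - \<delta>)) powr (-\<alpha>) > 31/32" "(1 - \<delta>) powr (-\<alpha>) < 2"
  proof -
    have "\<delta> \<noteq> 0" "dist \<delta> 0 < d0" using \<delta> d0(1) by (auto simp: \<delta>_def dist_real_def)
    then show "((1 + \<delta>) / (1 - \<delta>)) powr (-\<alpha>) > 31/32" "(1 - \<delta>) powr (-\<alpha>) < 2"
      using d0(2)[of \<delta>] by auto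
  qed
  define l1 where "l1 = (1 + \<delta>) / (1 - \<delta>)"
  have l1p: "l1 > 0" using \<delta> by (simp add: l1_def)
  obtain xa where xa: "xa > 0" "\<forall>x\<ge>xa. 31/32 * G x \<le> G (l1 * x)"
    using G_ratio_ev_ge[OF l1p, of "31/32"] dp(1) unfolding l1_def by blast
  obtain xb where xb: "xb > 0" "\<forall>x\<ge>xb. G ((1 - \<delta>) * x) \<le> 2 * G x"
    using G_ratio_ev_le[of "1 - \<delta>" 2] dp(2) \<delta> by auto
  define x1 where "x1 = max (xa / (1 - \<delta>)) xb"
  have x1: "x1 > 0" using xb by (simp add: x1_def)
  have Dm: "prob {\<omega> \<in> space M. (1 - \<delta>) * m < \<bar>Y 1 \<omega>\<bar> \<and> \<bar>Y 1 \<omega>\<bar> \<le> (1 + \<delta>) * m} \<le> G T / 16"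
    if T: "T \<ge> x1" and m: "m \<ge> T" for T m
  proof -
    have Tp: "T > 0" using T x1 by simp
    have xge: "(1 - \<delta>) * m \<ge> xa"
    proof -
      have "xa / (1 - \<delta>) \<le> m" using T m by (simp add: x1_def)
      then show ?thesis using \<delta> by (simp add: field_simps)
    qed
    have a0: "(1 - \<delta>) * m > 0" using \<delta> Tp m by simp
    have h1: "prob {\<omega> \<in> space M. (1 - \<delta>) * m < \<bar>Y 1 \<omega>\<bar> \<and> \<bar>Y 1 \<omega>\<bar> \<le> (1 + \<delta>) * m}
        = G ((1 - \<delta>) * m) - G ((1 + \<delta>) * m)"
      using a0 \<delta> Tp m by (intro D_prob) auto
    have eqm: "(1 + \<delta>) * m = l1 * ((1 - \<delta>) * m)" using \<delta> by (simp add: l1_def)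
    have h2: "31/32 * G ((1 - \<delta>) * m) \<le> G ((1 + \<delta>) * m)"
      unfolding eqm using xa(2) xge by blast
    have h3: "G ((1 - \<delta>) * m) \<le> G ((1 - \<delta>) * T)" using m \<delta> by (intro G_mono mult_left_mono) auto
    have h4: "G ((1 - \<delta>) * T) \<le> 2 * G T" using xb(2) T by (simp add: x1_def)
    show ?thesis using h1 h2 h3 h4 by linarith
  qed
  have main: "prob {\<omega> \<in> space M. u \<le> Y 1 \<omega> \<and> Y 1 \<omega> \<le> u + \<delta> * T \<and> \<bar>Y 1 \<omega>\<bar> > T} \<le> G T / 4"
    if T: "T \<ge> x1" for T u
  proof -
    have Tp: "T > 0" using T x1 by simp
    define m1 where "m1 = max u T"
    define m2 where "m2 = max (- u - \<delta> * T) T"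
    have incl: "{\<omega> \<in> space M. u \<le> Y 1 \<omega> \<and> Y 1 \<omega> \<le> u + \<delta> * T \<and> \<bar>Y 1 \<omega>\<bar> > T} \<subseteq>
      {\<omega> \<in> space M. (1 - \<delta>) * m1 < \<bar>Y 1 \<omega>\<bar> \<and> \<bar>Y 1 \<omega>\<bar> \<le> (1 + \<delta>) * m1} \<union>
      {\<omega> \<in> space M. (1 - \<delta>) * m2 < \<bar>Y 1 \<omega>\<bar> \<and> \<bar>Y 1 \<omega>\<bar> \<le> (1 + \<delta>) * m2}"
    proof
      fix \<omega> assume w: "\<omega> \<in> {\<omega> \<in> space M. u \<le> Y 1 \<omega> \<and> Y 1 \<omega> \<le> u + \<delta> * T \<and> \<bar>Y 1 \<omega>\<bar> > T}"
      define y where "y = Y 1 \<omega>"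
      have y: "u \<le> y" "y \<le> u + \<delta> * T" "\<bar>y\<bar> > T" using w by (auto simp: y_def)
      show "\<omega> \<in> {\<omega> \<in> space M. (1 - \<delta>) * m1 < \<bar>Y 1 \<omega>\<bar> \<and> \<bar>Y 1 \<omega>\<bar> \<le> (1 + \<delta>) * m1} \<union>
          {\<omega> \<in> space M. (1 - \<delta>) * m2 < \<bar>Y 1 \<omega>\<bar> \<and> \<bar>Y 1 \<omega>\<bar> \<le> (1 + \<delta>) * m2}"
      proof (cases "y > 0")
        case True
        have a: "m1 \<le> y" using y True by (auto simp: m1_def)
        have b: "\<delta> * T \<le> \<delta> * m1" using \<delta> by (intro mult_left_mono) (auto simp: m1_def)
        have "y \<le> m1 + \<delta> * m1" using y b by (auto simp: m1_def)
        moreover have "(1 - \<delta>) * m1 < m1" using \<delta> Tp by (simp add: m1_def algebra_simps)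
        ultimately show ?thesis using a True w by (auto simp: y_def algebra_simps)
      next
        case False
        then have yn: "y < 0" using y Tp by auto
        have a: "m2 \<le> - y" using y yn by (auto simp: m2_def)
        have b: "\<delta> * T \<le> \<delta> * m2" using \<delta> by (intro mult_left_mono) (auto simp: m2_def)
        have "- y \<le> m2 + \<delta> * m2" using y b by (auto simp: m2_def)
        moreover have "(1 - \<delta>) * m2 < m2" using \<delta> Tp by (simp add: m2_def algebra_simps)
        ultimately show ?thesis using a yn w by (auto simp: y_def algebra_simps)
      qed
    qed
    have "prob {\<omega> \<in> space M. u \<le> Y 1 \<omega> \<and> Y 1 \<omega> \<le> u + \<delta> * T \<and> \<bar>Y 1 \<omega>\<bar> > T} \<le>
      prob ({\<omega> \<in> space M. (1 - \<delta>) * m1 < \<bar>Y 1 \<omega>\<bar> \<and> \<bar>Y 1 \<omega>\<bar> \<le> (1 + \<delta>) * m1} \<union>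
      {\<omega> \<in> space M. (1 - \<delta>) * m2 < \<bar>Y 1 \<omega>\<bar> \<and> \<bar>Y 1 \<omega>\<bar> \<le> (1 + \<delta>) * m2})"
      using incl by (intro finite_measure_mono) auto
    also have "\<dots> \<le> prob {\<omega> \<in> space M. (1 - \<delta>) * m1 < \<bar>Y 1 \<omega>\<bar> \<and> \<bar>Y 1 \<omega>\<bar> \<le> (1 + \<delta>) * m1} +
      prob {\<omega> \<in> space M. (1 - \<delta>) * m2 < \<bar>Y 1 \<omega>\<bar> \<and> \<bar>Y 1 \<omega>\<bar> \<le> (1 + \<delta>) * m2}"
      by (intro measure_Un_le) auto
    also have "\<dots> \<le> G T / 16 + G T / 16"
      using T by (intro add_mono Dm) (auto simp: m1_def m2_def)
    finally show ?thesis using G_nonneg[of T] by simp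
  qed
  show ?thesis using \<delta> x1 main by blast
qed

end


lemma interval_form:
  fixes c r e :: real
  assumes "c \<noteq> 0" "e \<ge> 0"
  shows "\<exists>u. \<forall>y. \<bar>c * y + r\<bar> \<le> e \<longleftrightarrow> (u \<le> y \<and> y \<le> u + 2 * e / \<bar>c\<bar>)"
proof (cases "c > 0")
  case True
  show ?thesis
  proof (intro exI[of _ "(- r - e) / c"] allI)
    fix y
    have "\<bar>c * y + r\<bar> \<le> e \<longleftrightarrow> (- r - e) \<le> c * y \<and> c * y \<le> - r + e" by (auto simp: abs_le_iff)
    also have "\<dots> \<longleftrightarrow> (- r - e) / c \<le> y \<and> y \<le> (- r + e) / c"
      using True by (simp add: pos_divide_le_eq pos_le_divide_eq mult.commute)
    also have "(- r + e) / c = (- r - e) / c + 2 * e / \<bar>c\<bar>" using True by (simp add: field_simps)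
    finally show "\<bar>c * y + r\<bar> \<le> e \<longleftrightarrow> ((- r - e) / c \<le> y \<and> y \<le> (- r - e) / c + 2 * e / \<bar>c\<bar>)" .
  qed
next
  case False
  then have cn: "c < 0" using assms by simp
  show ?thesis
  proof (intro exI[of _ "(- r + e) / c"] allI)
    fix y
    have "\<bar>c * y + r\<bar> \<le> e \<longleftrightarrow> (- r - e) \<le> c * y \<and> c * y \<le> - r + e" by (auto simp: abs_le_iff)
    also have "\<dots> \<longleftrightarrow> (- r + e) / c \<le> y \<and> y \<le> (- r - e) / c"
      using cn by (simp add: neg_divide_le_eq neg_le_divide_eq mult.commute conj_commute)
    also have "(- r - e) / c = (- r + e) / c + 2 * e / \<bar>c\<bar>" using cn by (simp add: field_simps)
    finally show "\<bar>c * y + r\<bar> \<le> e \<longleftrightarrow> ((- r + e) / c \<le> y \<and> y \<le> (- r + e) / c + 2 * e / \<bar>c\<bar>)" .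
  qed
qed

lemma exp_bound: fixes s :: real assumes "0 \<le> s" "s \<le> 1" shows "s / 2 \<le> 1 - exp (- s)"
proof -
  have "1 + s \<le> exp s" by (rule exp_ge_add_one_self)
  then have "exp (- s) \<le> 1 / (1 + s)" using assms by (simp add: exp_minus field_simps)
  also have "1 / (1 + s) \<le> 1 - s / 2"
  proof -
    have ss: "s * s \<le> s * 1" using assms by (intro mult_left_mono) auto
    have "(1 + s) * (1 - s / 2) = 1 + s / 2 - s * s / 2" by (simp add: field_simps)
    then have "1 \<le> (1 + s) * (1 - s / 2)" using ss assms by linarith
    then show ?thesis using assms by (simp add: field_simps)
  qed
  finally show ?thesis by simp
qed

lemma comb:
  fixes p :: "'i \<Rightarrow> real"
  assumes I: "finite I" and p: "\<forall>j\<in>I. 0 \<le> p j \<and> p j \<le> 1/2" and pi: "0 \<le> \<pi>" "\<pi> < 1/8"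
    and hyp: "\<forall>J\<subseteq>I. 1 - exp (- (\<Sum>j\<in>J. p j)) \<le> \<pi> + (\<Sum>j\<in>J. p j) / 4"
  shows "(\<Sum>j\<in>I. p j) \<le> 4 * \<pi>"
  using I subset_refl[of I]
proof (induction I rule: finite_subset_induct')
  case empty then show ?case using pi by simp
next
  case (insert a F)
  define s where "s = (\<Sum>j\<in>insert a F. p j)"
  have s: "s = p a + (\<Sum>j\<in>F. p j)" using insert by (simp add: s_def)
  have "0 \<le> (\<Sum>j\<in>F. p j)" using p insert by (intro sum_nonneg) auto
  then have s01: "0 \<le> s" "s \<le> 1" using s insert p pi by auto
  have "s / 2 \<le> 1 - exp (- s)" by (rule exp_bound[OF s01])
  also have "\<dots> \<le> \<pi> + s / 4"
  proof -
    have sub: "insert a F \<subseteq> I" using insert by auto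
    show ?thesis using hyp sub unfolding s_def by blast
  qed
  finally show ?case by (simp add: s_def)
qed

context setting begin

lemma conv:
  fixes X R :: "'a \<Rightarrow> real"
  assumes ind: "indep_var borel X borel R" and B: "B \<in> sets borel"
    and b: "\<forall>r. prob {\<omega> \<in> space M. \<bar>X \<omega> + r\<bar> \<le> e \<and> X \<omega> \<in> B} \<le> b"
  shows "prob {\<omega> \<in> space M. \<bar>X \<omega> + R \<omega>\<bar> \<le> e \<and> X \<omega> \<in> B} \<le> b"
proof -
  have rv: "X \<in> borel_measurable M" "R \<in> borel_measurable M"
    and peq: "distr M borel X \<Otimes>\<^sub>M distr M borel R = distr M (borel \<Otimes>\<^sub>M borel) (\<lambda>x. (X x, R x))"
    using ind unfolding indep_var_distribution_eq by auto
  interpret PX: prob_space "distr M borel X" using rv by (intro prob_space_distr) auto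
  interpret PR: prob_space "distr M borel R" using rv by (intro prob_space_distr) auto
  interpret P: pair_prob_space "distr M borel X" "distr M borel R" ..
  define D where "D = {p \<in> space (borel \<Otimes>\<^sub>M borel). \<bar>fst p + snd p\<bar> \<le> e \<and> fst p \<in> B}"
  have Dm: "D \<in> sets (borel \<Otimes>\<^sub>M borel)" unfolding D_def using B by measurable
  have b0: "0 \<le> b" using b[rule_format, of 0] measure_nonneg[of M] by (meson order.trans)
  have "emeasure (distr M borel X \<Otimes>\<^sub>M distr M borel R) D
      = (\<integral>\<^sup>+ r. emeasure (distr M borel X) ((\<lambda>x. (x, r)) -` D) \<partial>distr M borel R)"
    using Dm by (intro P.emeasure_pair_measure_alt2) simp
  also have "\<dots> \<le> (\<integral>\<^sup>+ r. ennreal b \<partial>distr M borel R)"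
  proof (intro nn_integral_mono)
    fix r
    have "(\<lambda>x. (x, r)) -` D = {x. \<bar>x + r\<bar> \<le> e \<and> x \<in> B}" by (auto simp: D_def space_pair_measure)
    moreover have "{x. \<bar>x + r\<bar> \<le> e \<and> x \<in> B} \<in> sets borel"
    proof -
      have "{x. \<bar>x + r\<bar> \<le> e \<and> x \<in> B} = {x \<in> space borel. \<bar>x + r\<bar> \<le> e \<and> x \<in> B}" by simp
      also have "\<dots> \<in> sets borel" using B by measurable
      finally show ?thesis .
    qed
    ultimately have "emeasure (distr M borel X) ((\<lambda>x. (x, r)) -` D) = emeasure M (X -` {x. \<bar>x + r\<bar> \<le> e \<and> x \<in> B} \<inter> space M)"
      using rv by (simp add: emeasure_distr)
    also have "X -` {x. \<bar>x + r\<bar> \<le> e \<and> x \<in> B} \<inter> space M = {\<omega> \<in> space M. \<bar>X \<omega> + r\<bar> \<le> e \<and> X \<omega> \<in> B}" by auto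
    also have "emeasure M \<dots> = ennreal (prob {\<omega> \<in> space M. \<bar>X \<omega> + r\<bar> \<le> e \<and> X \<omega> \<in> B})"
      by (simp add: emeasure_eq_measure)
    also have "\<dots> \<le> ennreal b" using b by (simp add: ennreal_leI)
    finally show "emeasure (distr M borel X) ((\<lambda>x. (x, r)) -` D) \<le> ennreal b" .
  qed
  also have "\<dots> = ennreal b" using PR.emeasure_space_1 by simp
  finally have le: "emeasure (distr M borel X \<Otimes>\<^sub>M distr M borel R) D \<le> ennreal b" .
  have "prob {\<omega> \<in> space M. \<bar>X \<omega> + R \<omega>\<bar> \<le> e \<and> X \<omega> \<in> B} = measure (distr M (borel \<Otimes>\<^sub>M borel) (\<lambda>x. (X x, R x))) D"
    using rv Dm by (subst measure_distr) (auto simp: D_def space_pair_measure intro!: arg_cong[where f=prob])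
  also have "\<dots> = measure (distr M borel X \<Otimes>\<^sub>M distr M borel R) D" by (simp add: peq)
  also have "\<dots> \<le> b"
    using le b0 by (simp add: P.emeasure_eq_measure)
  finally show ?thesis .
qed

lemma union_lower:
  assumes J: "finite J"
  shows "1 - exp (- (\<Sum>j\<in>J. tt (c j))) \<le> prob (\<Union>j\<in>J. {\<omega> \<in> space M. \<bar>c j * Y j \<omega>\<bar> > 1})"
proof (cases "J = {}")
  case True then show ?thesis by simp
next
  case False
  define E where "E j = {\<omega> \<in> space M. \<bar>c j * Y j \<omega>\<bar> \<le> 1}" for j
  have ie: "indep_events E UNIV"
    unfolding E_def by (rule indep_eventsI_indep_vars[OF indep]) measurable
  have pE: "prob (E j) = 1 - tt (c j)" for j
  proof -
    have "E j = space M - {\<omega> \<in> space M. \<bar>c j * Y j \<omega>\<bar> > 1}" by (auto simp: E_def)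
    then have "prob (E j) = 1 - prob {\<omega> \<in> space M. \<bar>c j * Y j \<omega>\<bar> > 1}" by (simp add: prob_compl)
    then show ?thesis by (simp add: tt_prob)
  qed
  have "prob (\<Inter>j\<in>J. E j) = (\<Prod>j\<in>J. prob (E j))"
  proof -
    have "\<forall>K\<subseteq>UNIV. K \<noteq> {} \<longrightarrow> finite K \<longrightarrow> prob (\<Inter>j\<in>K. E j) = (\<Prod>j\<in>K. prob (E j))"
      using ie unfolding indep_events_def by blast
    then show ?thesis using J False by blast
  qed
  also have "\<dots> = (\<Prod>j\<in>J. 1 - tt (c j))" by (simp add: pE)
  also have "\<dots> \<le> (\<Prod>j\<in>J. exp (- tt (c j)))"
  proof (intro prod_mono conjI)
    fix j
    have "prob {\<omega> \<in> space M. \<bar>c j * Y j \<omega>\<bar> > 1} \<le> 1" by (rule prob_le_1)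
    then have "tt (c j) \<le> 1" by (simp add: tt_prob)
    then show "0 \<le> 1 - tt (c j)" by simp
    show "1 - tt (c j) \<le> exp (- tt (c j))" using exp_ge_add_one_self[of "- tt (c j)"] by simp
  qed
  also have "\<dots> = exp (\<Sum>j\<in>J. - tt (c j))" using J by (rule exp_sum[symmetric])
  also have "\<dots> = exp (- (\<Sum>j\<in>J. tt (c j)))" by (simp add: sum_negf)
  finally have i: "prob (\<Inter>j\<in>J. E j) \<le> exp (- (\<Sum>j\<in>J. tt (c j)))" .
  have "(\<Union>j\<in>J. {\<omega> \<in> space M. \<bar>c j * Y j \<omega>\<bar> > 1}) = space M - (\<Inter>j\<in>J. E j)"
    using False by (auto simp: E_def) (meson not_less)
  moreover have "(\<Inter>j\<in>J. E j) \<in> events" using False J by (auto simp: E_def)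
  ultimately have "prob (\<Union>j\<in>J. {\<omega> \<in> space M. \<bar>c j * Y j \<omega>\<bar> > 1}) = 1 - prob (\<Inter>j\<in>J. E j)"
    by (simp add: prob_compl)
  then show ?thesis using i by simp
qed

end


context setting begin

lemma conc_c:
  assumes \<delta>: "\<delta> > 0"
    and conc: "\<forall>T\<ge>x1. \<forall>u. prob {\<omega> \<in> space M. u \<le> Y 1 \<omega> \<and> Y 1 \<omega> \<le> u + \<delta> * T \<and> \<bar>Y 1 \<omega>\<bar> > T} \<le> G T / 4"
    and c: "c \<noteq> 0" "1 / \<bar>c\<bar> \<ge> x1"
  shows "prob {\<omega> \<in> space M. \<bar>c * Y j \<omega> + r\<bar> \<le> \<delta> / 2 \<and> c * Y j \<omega> \<in> {x. \<bar>x\<bar> > 1}} \<le> tt c / 4"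
proof -
  obtain u where u: "\<And>y. \<bar>c * y + r\<bar> \<le> \<delta> / 2 \<longleftrightarrow> (u \<le> y \<and> y \<le> u + 2 * (\<delta> / 2) / \<bar>c\<bar>)"
    using interval_form[OF c(1), of "\<delta> / 2" r] \<delta> by auto
  define T where "T = 1 / \<bar>c\<bar>"
  have e2: "2 * (\<delta> / 2) / \<bar>c\<bar> = \<delta> * T" by (simp add: T_def)
  have gt: "\<bar>c * y\<bar> > 1 \<longleftrightarrow> \<bar>y\<bar> > T" for y
    using trunc_iff[OF c(1), of y] by (auto simp: T_def not_le[symmetric])
  define Bs where "Bs = {y. u \<le> y \<and> y \<le> u + \<delta> * T \<and> \<bar>y\<bar> > T}"
  have Bs: "Bs \<in> sets borel" unfolding Bs_def by measurable
  have "{\<omega> \<in> space M. \<bar>c * Y j \<omega> + r\<bar> \<le> \<delta> / 2 \<and> c * Y j \<omega> \<in> {x. \<bar>x\<bar> > 1}} = {\<omega> \<in> space M. Y j \<omega> \<in> Bs}"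
    using u gt e2 by (auto simp: Bs_def)
  then have "prob {\<omega> \<in> space M. \<bar>c * Y j \<omega> + r\<bar> \<le> \<delta> / 2 \<and> c * Y j \<omega> \<in> {x. \<bar>x\<bar> > 1}}
      = prob {\<omega> \<in> space M. Y 1 \<omega> \<in> Bs}" using prob_transfer[OF Bs] by simp
  also have "\<dots> = prob {\<omega> \<in> space M. u \<le> Y 1 \<omega> \<and> Y 1 \<omega> \<le> u + \<delta> * T \<and> \<bar>Y 1 \<omega>\<bar> > T}"
    by (simp add: Bs_def)
  also have "\<dots> \<le> G T / 4"
  proof -
    have "T \<ge> x1" using c by (simp add: T_def)
    then show ?thesis using conc by blast
  qed
  also have "\<dots> = tt c / 4" using c by (simp add: tt_def T_def)
  finally show ?thesis .
qed

lemma big_c: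
  assumes \<delta>: "\<delta> > 0"
    and q: "\<forall>u. prob {\<omega> \<in> space M. u \<le> Y 1 \<omega> \<and> Y 1 \<omega> \<le> u + L} \<le> 1 - q"
    and c: "c \<noteq> 0" "\<delta> / \<bar>c\<bar> \<le> L"
  shows "prob {\<omega> \<in> space M. \<bar>c * Y j \<omega> + r\<bar> \<le> \<delta> / 2 \<and> c * Y j \<omega> \<in> UNIV} \<le> 1 - q"
proof -
  obtain u where u: "\<And>y. \<bar>c * y + r\<bar> \<le> \<delta> / 2 \<longleftrightarrow> (u \<le> y \<and> y \<le> u + 2 * (\<delta> / 2) / \<bar>c\<bar>)"
    using interval_form[OF c(1), of "\<delta> / 2" r] \<delta> by auto
  have e2: "2 * (\<delta> / 2) / \<bar>c\<bar> = \<delta> / \<bar>c\<bar>" by simp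
  have "prob {\<omega> \<in> space M. \<bar>c * Y j \<omega> + r\<bar> \<le> \<delta> / 2 \<and> c * Y j \<omega> \<in> UNIV} \<le> prob {\<omega> \<in> space M. Y j \<omega> \<in> {u..u + L}}"
    using u c e2 by (intro finite_measure_mono) force+
  also have "\<dots> = prob {\<omega> \<in> space M. Y 1 \<omega> \<in> {u..u + L}}" by (rule prob_transfer) simp
  also have "\<dots> \<le> 1 - q" using q by simp
  finally show ?thesis .
qed

lemma fwd_finite:
  assumes \<delta>: "\<delta> > 0" and x1: "x1 > 0" "G x1 \<le> 1/2"
    and conc: "\<forall>T\<ge>x1. \<forall>u. prob {\<omega> \<in> space M. u \<le> Y 1 \<omega> \<and> Y 1 \<omega> \<le> u + \<delta> * T \<and> \<bar>Y 1 \<omega>\<bar> > T} \<le> G T / 4"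
    and q: "\<forall>u. prob {\<omega> \<in> space M. u \<le> Y 1 \<omega> \<and> Y 1 \<omega> \<le> u + \<delta> * x1} \<le> 1 - q"
    and I: "finite I"
    and small: "prob {\<omega> \<in> space M. \<bar>\<Sum>j\<in>I. c j * Y j \<omega>\<bar> > \<delta> / 2} < min q (1/8)"
  shows "(\<Sum>j\<in>I. tt (c j)) \<le> 4 * prob {\<omega> \<in> space M. \<bar>\<Sum>j\<in>I. c j * Y j \<omega>\<bar> > \<delta> / 2}"
proof -
  define \<pi> where "\<pi> = prob {\<omega> \<in> space M. \<bar>\<Sum>j\<in>I. c j * Y j \<omega>\<bar> > \<delta> / 2}"
  define Z where "Z i \<omega> = c i * Y i \<omega>" for i \<omega>
  have Zind: "indep_vars (\<lambda>_. borel) Z UNIV"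
    unfolding Z_def by (rule indep_vars_compose2[OF indep, where Y="\<lambda>i x. c i * x"]) simp
  have splitS: "(\<Sum>i\<in>I. c i * Y i \<omega>) = Z j \<omega> + (\<Sum>i\<in>I - {j}. Z i \<omega>)" if "j \<in> I" for j \<omega>
    using that I by (simp add: Z_def sum.remove)
  have iv: "indep_var borel (Z j) borel (\<lambda>\<omega>. \<Sum>i\<in>I - {j}. Z i \<omega>)" if "j \<in> I" for j
  proof (rule indep_vars_sum)
    show "finite (I - {j})" "j \<notin> I - {j}" using I by auto
    show "indep_vars (\<lambda>_. borel) Z (insert j (I - {j}))" by (rule indep_vars_subset[OF Zind]) simp
  qed
  have compl: "prob {\<omega> \<in> space M. \<bar>\<Sum>j\<in>I. c j * Y j \<omega>\<bar> \<le> \<delta> / 2} = 1 - \<pi>"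
  proof -
    have "{\<omega> \<in> space M. \<bar>\<Sum>j\<in>I. c j * Y j \<omega>\<bar> \<le> \<delta> / 2} = space M - {\<omega> \<in> space M. \<bar>\<Sum>j\<in>I. c j * Y j \<omega>\<bar> > \<delta> / 2}"
      by auto
    then show ?thesis by (simp add: prob_compl \<pi>_def)
  qed
  have sm: "\<bar>c j\<bar> \<le> 1 / x1" if j: "j \<in> I" for j
  proof (rule ccontr)
    assume "\<not> \<bar>c j\<bar> \<le> 1 / x1"
    then have cj: "\<bar>c j\<bar> > 1 / x1" by simp
    then have c0: "c j \<noteq> 0" using x1 by (auto simp: not_le)
    have "\<delta> / \<bar>c j\<bar> \<le> \<delta> * x1"
    proof -
      have "1 / \<bar>c j\<bar> < x1" using cj x1 c0 by (simp add: field_simps)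
      then show ?thesis using \<delta> by (simp add: divide_inverse mult_left_mono less_imp_le)
    qed
    then have br: "\<forall>r. prob {\<omega> \<in> space M. \<bar>Z j \<omega> + r\<bar> \<le> \<delta> / 2 \<and> Z j \<omega> \<in> UNIV} \<le> 1 - q"
      using big_c[OF \<delta> q c0] by (simp add: Z_def)
    have "prob {\<omega> \<in> space M. \<bar>Z j \<omega> + (\<Sum>i\<in>I - {j}. Z i \<omega>)\<bar> \<le> \<delta> / 2 \<and> Z j \<omega> \<in> UNIV} \<le> 1 - q"
      by (rule conv[OF iv[OF j] _ br]) simp
    then have "1 - \<pi> \<le> 1 - q" using compl splitS[OF j] by simp
    then show False using small by (simp add: \<pi>_def)
  qed
  have pb: "0 \<le> tt (c j) \<and> tt (c j) \<le> 1/2" if j: "j \<in> I" for j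
  proof (cases "c j = 0")
    case True then show ?thesis by (simp add: tt_def)
  next
    case False
    have "x1 \<le> 1 / \<bar>c j\<bar>" using sm[OF j] False x1 by (simp add: field_simps)
    then have "G (1 / \<bar>c j\<bar>) \<le> G x1" by (rule G_mono)
    then show ?thesis using x1 False by (simp add: tt_def G_nonneg)
  qed
  have pc: "prob {\<omega> \<in> space M. \<bar>\<Sum>i\<in>I. c i * Y i \<omega>\<bar> \<le> \<delta> / 2 \<and> \<bar>c j * Y j \<omega>\<bar> > 1} \<le> tt (c j) / 4"
    if j: "j \<in> I" for j
  proof (cases "c j = 0")
    case True then show ?thesis by (simp add: tt_def)
  next
    case False
    have "x1 \<le> 1 / \<bar>c j\<bar>" using sm[OF j] False x1 by (simp add: field_simps)
    then have cc: "\<forall>r. prob {\<omega> \<in> space M. \<bar>Z j \<omega> + r\<bar> \<le> \<delta> / 2 \<and> Z j \<omega> \<in> {x. \<bar>x\<bar> > 1}} \<le> tt (c j) / 4"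
      using conc_c[OF \<delta> conc False] by (simp add: Z_def)
    have "prob {\<omega> \<in> space M. \<bar>Z j \<omega> + (\<Sum>i\<in>I - {j}. Z i \<omega>)\<bar> \<le> \<delta> / 2 \<and> Z j \<omega> \<in> {x. \<bar>x\<bar> > 1}} \<le> tt (c j) / 4"
      by (rule conv[OF iv[OF j] _ cc]) measurable
    then show ?thesis using splitS[OF j] by (simp add: Z_def)
  qed
  have pd: "1 - exp (- (\<Sum>j\<in>J. tt (c j))) \<le> \<pi> + (\<Sum>j\<in>J. tt (c j)) / 4" if J: "J \<subseteq> I" for J
  proof -
    have fJ: "finite J" using J I by (rule finite_subset)
    have "(\<Union>j\<in>J. {\<omega> \<in> space M. \<bar>c j * Y j \<omega>\<bar> > 1}) \<subseteq>
        {\<omega> \<in> space M. \<bar>\<Sum>j\<in>I. c j * Y j \<omega>\<bar> > \<delta> / 2} \<union>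
        (\<Union>j\<in>J. {\<omega> \<in> space M. \<bar>\<Sum>i\<in>I. c i * Y i \<omega>\<bar> \<le> \<delta> / 2 \<and> \<bar>c j * Y j \<omega>\<bar> > 1})"
      by auto
    then have "prob (\<Union>j\<in>J. {\<omega> \<in> space M. \<bar>c j * Y j \<omega>\<bar> > 1}) \<le>
        prob ({\<omega> \<in> space M. \<bar>\<Sum>j\<in>I. c j * Y j \<omega>\<bar> > \<delta> / 2} \<union>
        (\<Union>j\<in>J. {\<omega> \<in> space M. \<bar>\<Sum>i\<in>I. c i * Y i \<omega>\<bar> \<le> \<delta> / 2 \<and> \<bar>c j * Y j \<omega>\<bar> > 1}))"
      using fJ by (intro finite_measure_mono) auto
    also have "\<dots> \<le> \<pi> + prob (\<Union>j\<in>J. {\<omega> \<in> space M. \<bar>\<Sum>i\<in>I. c i * Y i \<omega>\<bar> \<le> \<delta> / 2 \<and> \<bar>c j * Y j \<omega>\<bar> > 1})"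
      unfolding \<pi>_def using fJ by (intro measure_Un_le) auto
    also have "prob (\<Union>j\<in>J. {\<omega> \<in> space M. \<bar>\<Sum>i\<in>I. c i * Y i \<omega>\<bar> \<le> \<delta> / 2 \<and> \<bar>c j * Y j \<omega>\<bar> > 1})
        \<le> (\<Sum>j\<in>J. prob {\<omega> \<in> space M. \<bar>\<Sum>i\<in>I. c i * Y i \<omega>\<bar> \<le> \<delta> / 2 \<and> \<bar>c j * Y j \<omega>\<bar> > 1})"
      using fJ by (intro finite_measure_subadditive_finite) auto
    also have "\<dots> \<le> (\<Sum>j\<in>J. tt (c j) / 4)" using J by (intro sum_mono pc) auto
    also have "\<dots> = (\<Sum>j\<in>J. tt (c j)) / 4" by (simp add: sum_divide_distrib)
    finally show ?thesis using union_lower[OF fJ, of c] by simp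
  qed
  have "(\<Sum>j\<in>I. tt (c j)) \<le> 4 * \<pi>"
  proof (rule comb[OF I])
    show "\<forall>j\<in>I. 0 \<le> tt (c j) \<and> tt (c j) \<le> 1/2" using pb by blast
    show "0 \<le> \<pi>" "\<pi> < 1/8" using small by (auto simp: \<pi>_def)
    show "\<forall>J\<subseteq>I. 1 - exp (- (\<Sum>j\<in>J. tt (c j))) \<le> \<pi> + (\<Sum>j\<in>J. tt (c j)) / 4" using pd by blast
  qed
  then show ?thesis by (simp add: \<pi>_def)
qed

end


context setting begin

lemma forward:
  fixes c :: "nat \<Rightarrow> int \<Rightarrow> real" and V :: "nat \<Rightarrow> 'a \<Rightarrow> real"
  assumes csum: "\<forall>n. (\<lambda>j. tt (c n j)) summable_on UNIV"
    and Vmeas: "\<forall>n. V n \<in> borel_measurable M"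
    and Vdef: "\<forall>n. AE \<omega> in M. (\<lambda>N. \<Sum>j\<in>{- int N..int N}. c n j * Y j \<omega>) \<longlonglongrightarrow> V n \<omega>"
    and tzp: "tendsto_zero_in_prob V"
  shows "(\<lambda>n. \<Sum>\<^sub>\<infinity>j. tt (c n j)) \<longlonglongrightarrow> 0"
proof -
  obtain \<delta> x1' where \<delta>: "\<delta> > 0" and x1': "x1' > 0"
    and conc': "\<forall>T\<ge>x1'. \<forall>u. prob {\<omega> \<in> space M. u \<le> Y 1 \<omega> \<and> Y 1 \<omega> \<le> u + \<delta> * T \<and> \<bar>Y 1 \<omega>\<bar> > T} \<le> G T / 4"
    using concen by blast
  obtain x2 where x2: "x2 > 0" "\<forall>x\<ge>x2. G x \<le> 1/2" using G_small[of "1/2"] by auto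
  define x1 where "x1 = max x1' x2"
  have x1: "x1 > 0" "G x1 \<le> 1/2" using x1' x2 by (auto simp: x1_def)
  have conc: "\<forall>T\<ge>x1. \<forall>u. prob {\<omega> \<in> space M. u \<le> Y 1 \<omega> \<and> Y 1 \<omega> \<le> u + \<delta> * T \<and> \<bar>Y 1 \<omega>\<bar> > T} \<le> G T / 4"
    using conc' by (auto simp: x1_def)
  obtain q where q0: "q > 0" and q: "\<forall>u. prob {\<omega> \<in> space M. u \<le> Y 1 \<omega> \<and> Y 1 \<omega> \<le> u + \<delta> * x1} \<le> 1 - q"
    using noncon[of "\<delta> * x1"] \<delta> x1 by auto
  define S where "S n = (\<Sum>\<^sub>\<infinity>j. tt (c n j))" for n
  have S0: "S n \<ge> 0" for n unfolding S_def by (intro infsum_nonneg tt_nonneg)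
  show ?thesis
  proof (rule order_tendstoI)
    fix a :: real assume "a < 0"
    then show "\<forall>\<^sub>F n in sequentially. a < (\<Sum>\<^sub>\<infinity>j. tt (c n j))"
    proof (intro always_eventually allI)
      fix n show "a < (\<Sum>\<^sub>\<infinity>j. tt (c n j))" using S0[of n] \<open>a < 0\<close> unfolding S_def by linarith
    qed
  next
    fix e :: real assume e: "e > 0"
    define \<rho> where "\<rho> = min (min q (1/8)) (e/8)"
    have \<rho>: "\<rho> > 0" using q0 e by (simp add: \<rho>_def)
    have \<rho>1: "\<rho> \<le> min q (1/8)" "\<rho> \<le> e / 8" unfolding \<rho>_def by (rule min.cobounded1, rule min.cobounded2)
    have "(\<lambda>n. prob {\<omega> \<in> space M. \<bar>V n \<omega>\<bar> > \<delta> / 4}) \<longlonglongrightarrow> 0"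
    proof -
      have d4: "\<delta> / 4 > 0" using \<delta> by simp
      show ?thesis using tzp d4 unfolding tendsto_zero_in_prob_def by blast
    qed
    from order_tendstoD(2)[OF this, of "\<rho> / 2"] \<rho>
    have ev: "\<forall>\<^sub>F n in sequentially. prob {\<omega> \<in> space M. \<bar>V n \<omega>\<bar> > \<delta> / 4} < \<rho> / 2" by simp
    show "\<forall>\<^sub>F n in sequentially. (\<Sum>\<^sub>\<infinity>j. tt (c n j)) < e"
      using ev
    proof eventually_elim
      case (elim n)
      define P where "P N = (\<lambda>\<omega>. \<Sum>j\<in>{- int N..int N}. c n j * Y j \<omega>)" for N
      have Pm[measurable]: "P N \<in> borel_measurable M" for N unfolding P_def by measurable
      have Vm[measurable]: "V n \<in> borel_measurable M" using Vmeas by blast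
      have conv: "(\<lambda>N. prob {\<omega> \<in> space M. \<bar>P N \<omega> - V n \<omega>\<bar> > \<delta> / 4}) \<longlonglongrightarrow> 0"
        by (rule ae_to_prob) (use Vdef \<delta> in \<open>auto simp: P_def\<close>)
      from order_tendstoD(2)[OF this, of "\<rho> / 2"] \<rho>
      obtain N1 where N1: "\<And>N. N \<ge> N1 \<Longrightarrow> prob {\<omega> \<in> space M. \<bar>P N \<omega> - V n \<omega>\<bar> > \<delta> / 4} < \<rho> / 2"
        by (auto simp: eventually_sequentially)
      have fin: "(\<Sum>j\<in>Q. tt (c n j)) \<le> e / 2" if Q: "finite Q" for Q
      proof -
        define N0 where "N0 = nat (Max (insert 0 (abs ` Q)))"
        define N where "N = max N0 N1"
        have QI: "Q \<subseteq> {- int N..int N}"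
        proof
          fix j assume j: "j \<in> Q"
          have "\<bar>j\<bar> \<le> Max (insert 0 (abs ` Q))" using Q j by (intro Max_ge) auto
          moreover have "int N0 \<le> int N" by (simp add: N_def)
          moreover have "Max (insert 0 (abs ` Q)) = int N0"
            using Q by (simp add: N0_def)
          ultimately show "j \<in> {- int N..int N}" by auto
        qed
        have piN: "prob {\<omega> \<in> space M. \<bar>P N \<omega>\<bar> > \<delta> / 2} < \<rho>"
        proof -
          have "prob {\<omega> \<in> space M. \<bar>P N \<omega>\<bar> > \<delta> / 2} \<le>
              prob ({\<omega> \<in> space M. \<bar>V n \<omega>\<bar> > \<delta> / 4} \<union> {\<omega> \<in> space M. \<bar>P N \<omega> - V n \<omega>\<bar> > \<delta> / 4})"
          proof (intro finite_measure_mono)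
            show "{\<omega> \<in> space M. \<bar>P N \<omega>\<bar> > \<delta> / 2} \<subseteq> {\<omega> \<in> space M. \<bar>V n \<omega>\<bar> > \<delta> / 4} \<union> {\<omega> \<in> space M. \<bar>P N \<omega> - V n \<omega>\<bar> > \<delta> / 4}"
            proof
              fix x assume "x \<in> {\<omega> \<in> space M. \<bar>P N \<omega>\<bar> > \<delta> / 2}"
              moreover have "\<bar>P N x\<bar> \<le> \<bar>V n x\<bar> + \<bar>P N x - V n x\<bar>" by linarith
              ultimately show "x \<in> {\<omega> \<in> space M. \<bar>V n \<omega>\<bar> > \<delta> / 4} \<union> {\<omega> \<in> space M. \<bar>P N \<omega> - V n \<omega>\<bar> > \<delta> / 4}"
                by auto
            qed
          qed auto
          also have "\<dots> \<le> prob {\<omega> \<in> space M. \<bar>V n \<omega>\<bar> > \<delta> / 4} + prob {\<omega> \<in> space M. \<bar>P N \<omega> - V n \<omega>\<bar> > \<delta> / 4}"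
            by (intro measure_Un_le) auto
          also have "\<dots> < \<rho> / 2 + \<rho> / 2" using elim N1[of N] by (intro add_less_le_mono) (auto simp: N_def)
          finally show ?thesis by simp
        qed
        have "(\<Sum>j\<in>{- int N..int N}. tt (c n j)) \<le> 4 * prob {\<omega> \<in> space M. \<bar>P N \<omega>\<bar> > \<delta> / 2}"
          unfolding P_def
        proof (rule fwd_finite[OF \<delta> x1 conc q])
          show "finite {- int N..int N}" by simp
          show "prob {\<omega> \<in> space M. \<bar>\<Sum>j\<in>{- int N..int N}. c n j * Y j \<omega>\<bar> > \<delta> / 2} < min q (1/8)"
            using piN \<rho>1 unfolding P_def by linarith
        qed
        also have "\<dots> \<le> e / 2" using piN \<rho>1 by linarith
        finally have "(\<Sum>j\<in>{- int N..int N}. tt (c n j)) \<le> e / 2" .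
        moreover have "(\<Sum>j\<in>Q. tt (c n j)) \<le> (\<Sum>j\<in>{- int N..int N}. tt (c n j))"
          using QI by (intro sum_mono2 tt_nonneg) auto
        ultimately show ?thesis by linarith
      qed
      have "(\<Sum>\<^sub>\<infinity>j. tt (c n j)) \<le> e / 2"
        using csum fin by (intro infsum_le_finite_sums) auto
      then show ?case using e by simp
    qed
  qed
qed

end

theorem proposition9:
  fixes M :: "'a measure" and Y :: "int \<Rightarrow> 'a \<Rightarrow> real"
    and \<alpha> :: real and h :: "real \<Rightarrow> real"
    and c :: "nat \<Rightarrow> int \<Rightarrow> real" and V :: "nat \<Rightarrow> 'a \<Rightarrow> real"
  assumes ps: "prob_space M"
    and indep: "prob_space.indep_vars M (\<lambda>_. borel) Y UNIV"
    and ident: "\<forall>j. distr M borel (Y j) = distr M borel (Y 1)"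
    and alpha: "0 < \<alpha>" "\<alpha> < 2"
    and sv: "slowly_varying h"
    and tail: "\<forall>x>0. measure M {\<omega> \<in> space M. \<bar>Y 1 \<omega>\<bar> > x} = x powr (-\<alpha>) * h x"
    and mean0: "\<alpha> > 1 \<Longrightarrow> integrable M (Y 1) \<and> integral\<^sup>L M (Y 1) = 0"
    and symm: "\<alpha> = 1 \<Longrightarrow> distr M borel (\<lambda>\<omega>. - Y 1 \<omega>) = distr M borel (Y 1)"
    and csum: "\<forall>n. (\<lambda>j. tail_term \<alpha> h (c n j)) summable_on UNIV"
    and Vmeas: "\<forall>n. V n \<in> borel_measurable M"
    and Vdef: "\<forall>n. AE \<omega> in M.
                 (\<lambda>N. \<Sum>j\<in>{- int N..int N}. c n j * Y j \<omega>) \<longlonglongrightarrow> V n \<omega>"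
  shows "prob_space.tendsto_zero_in_prob M V \<longleftrightarrow>
           (\<lambda>n. \<Sum>\<^sub>\<infinity>j. tail_term \<alpha> h (c n j)) \<longlonglongrightarrow> 0"
proof -
  interpret setting M Y \<alpha> h
    unfolding setting_def setting_axioms_def using ps indep ident alpha sv tail mean0 symm by blast
  have csum': "\<forall>n. (\<lambda>j. tt (c n j)) summable_on UNIV" using csum by (simp add: tt_eq)
  show ?thesis
  proof
    assume "tendsto_zero_in_prob V"
    then have "(\<lambda>n. \<Sum>\<^sub>\<infinity>j. tt (c n j)) \<longlonglongrightarrow> 0" using forward[OF csum' Vmeas Vdef] by blast
    then show "(\<lambda>n. \<Sum>\<^sub>\<infinity>j. tail_term \<alpha> h (c n j)) \<longlonglongrightarrow> 0" by (simp add: tt_eq)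
  next
    assume "(\<lambda>n. \<Sum>\<^sub>\<infinity>j. tail_term \<alpha> h (c n j)) \<longlonglongrightarrow> 0"
    then have "(\<lambda>n. \<Sum>\<^sub>\<infinity>j. tt (c n j)) \<longlonglongrightarrow> 0" by (simp add: tt_eq)
    then show "tendsto_zero_in_prob V" using backward[OF csum' Vmeas Vdef] by blast
  qed
qed


end
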